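(* Let $1\le p<2$, let $f\in\mathcal H_0$, let $u$ solve the gradient flow $\partial_tu+\partial J(u)\ni0$, $u(0)=f$, with (finite) extinction time $T_{\mathrm{ex}}$, and set $\lambda:=\frac{1}{(2-p)T_{\mathrm{ex}}}$, $a(t):=(1-(2-p)\lambda t)^{\frac1{2-p}}$ and $w(t):=u(t)/a(t)$ for $0\le t<T_{\mathrm{ex}}$. Assume that there are $w_*\in\mathcal H$ and a sequence $t_k\nearrow T_{\mathrm{ex}}$ with $w(t_k)\to w_*$ strongly in $\mathcal H$ (or that $w(t)\to w_*$ strongly as $t\to T_{\mathrm{ex}}$). Then $\lambda w_*\in\partial J(w_* )$, $w_*\ne 0$, and $\|w_*\|\le\|f\|$.
   Context: $\mathcal H$ is a real Hilbert space with inner product $\langle\cdot,\cdot\rangle$ and norm $\|\cdot\|$. $J:\mathcal H\to\mathbb R\cup\{\infty\}$ is convex, lower semicontinuous, proper, with dense effective domain, and absolutely $p$-homogeneous: $J(cu)=|c|^pJ(u)$ for $c\ne0$ and $J(0)=0$. Standing coercivity assumption: $\lambda_1:=\inf_{u\in\mathcal H_0}pJ(u)/\|u\|^p>0$. $\partial J(u)=\{\zeta: J(u)+\langle\zeta,v-u\rangle\le J(v)\ \forall v\}$; $\mathcal N(J)=\{u:J(u)=0\}$; $\mathcal H_0:=\mathcal N(J)^\perp\setminus\{0\}$. The gradient flow solution (Brezis) is the unique continuous $u:[0,\infty)\to\mathcal H$, Lipschitz on $[\delta,\infty)$ for all $\delta>0$, right-differentiable on $(0,\infty)$ with $u(0)=f$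 and $\partial_t^+u(t)=-\zeta(t)$, $\zeta(t)$ the minimal-norm element of $\partial J(u(t))$. $T_{\mathrm{ex}}:=\inf\{T>0:u(t)=0\ \forall t\ge T\}$, which is finite for $p<2$. The function $a$ is the solution of $a'=-\lambda a^{p-1}$, $a(0)=1$, i.e. $a(t)=(1-t/T_{\mathrm{ex}})^{1/(2-p)}$. *)

theory Defs
  imports "HOL-Analysis.Analysis"
begin

(* Functionals J : H -> R \<union> {\<infinity>} are modelled as 'a \<Rightarrow> ereal, never taking -\<infinity> (properness). *)

definition ereal_convex :: "('a::real_vector \<Rightarrow> ereal) \<Rightarrow> bool" where
  "ereal_convex J \<longleftrightarrow>
     (\<forall>x y t. 0 \<le> t \<and> t \<le> 1 \<longrightarrow>
        J (t *\<^sub>R x + (1 - t) *\<^sub>R y) \<le> ereal t * J x + ereal (1 - t) * J y)"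

definition ereal_lsc :: "('a::topological_space \<Rightarrow> ereal) \<Rightarrow> bool" where
  "ereal_lsc J \<longleftrightarrow> (\<forall>c. closed {x. J x \<le> c})"

definition ereal_proper :: "('a \<Rightarrow> ereal) \<Rightarrow> bool" where
  "ereal_proper J \<longleftrightarrow> (\<forall>x. J x \<noteq> -\<infinity>) \<and> (\<exists>x. J x \<noteq> \<infinity>)"

definition eff_dom :: "('a \<Rightarrow> ereal) \<Rightarrow> 'a set" where
  "eff_dom J = {x. J x < \<infinity>}"

definition abs_p_homogeneous :: "real \<Rightarrow> ('a::real_vector \<Rightarrow> ereal) \<Rightarrow> bool" where
  "abs_p_homogeneous p J \<longleftrightarrow>
     (\<forall>c u. c \<noteq> 0 \<longrightarrow> J (c *\<^sub>R u) = ereal (\<bar>c\<bar> powr p) * J u) \<and> J 0 = 0"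

definition subdiff :: "('a::real_inner \<Rightarrow> ereal) \<Rightarrow> 'a \<Rightarrow> 'a set" where
  "subdiff J u = {\<zeta>. \<forall>v. J u + ereal (\<zeta> \<bullet> (v - u)) \<le> J v}"

definition null_set :: "('a \<Rightarrow> ereal) \<Rightarrow> 'a set" where
  "null_set J = {u. J u = 0}"

definition H0 :: "('a::real_inner \<Rightarrow> ereal) \<Rightarrow> 'a set" where
  "H0 J = {x. \<forall>y\<in>null_set J. x \<bullet> y = 0} - {0}"

definition lambda1 :: "real \<Rightarrow> ('a::real_inner \<Rightarrow> ereal) \<Rightarrow> ereal" where
  "lambda1 p J = (INF u\<in>H0 J. ereal p * J u / ereal (norm u powr p))"

definition min_norm_elem :: "'a::real_normed_vector \<Rightarrow> 'a set \<Rightarrow> bool" where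
  "min_norm_elem \<zeta> S \<longleftrightarrow> \<zeta> \<in> S \<and> (\<forall>\<eta>\<in>S. norm \<zeta> \<le> norm \<eta>)"

(* Brezis gradient flow solution of \<partial>_t u + \<partial>J(u) \<ni> 0, u(0) = f (only t \<ge> 0 matters) *)
definition gradient_flow :: "('a::real_inner \<Rightarrow> ereal) \<Rightarrow> 'a \<Rightarrow> (real \<Rightarrow> 'a) \<Rightarrow> bool" where
  "gradient_flow J f u \<longleftrightarrow>
     continuous_on {0..} u \<and>
     (\<forall>\<delta>>0. \<exists>L. L-lipschitz_on {\<delta>..} u) \<and>
     u 0 = f \<and>
     (\<forall>t>0. \<exists>\<zeta>. min_norm_elem \<zeta> (subdiff J (u t)) \<and>
                 (u has_vector_derivative (- \<zeta>)) (at t within {t..}))"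

definition extinction_time :: "(real \<Rightarrow> 'a::zero) \<Rightarrow> real" where
  "extinction_time u = Inf {T. T > 0 \<and> (\<forall>t\<ge>T. u t = 0)}"

end

theory Submission
  imports Defs "HOL-Analysis.Analysis"
begin


lemma mono_right_aux:
  fixes g :: "real \<Rightarrow> real"
  assumes ab: "a < b" and cont: "continuous_on {a..b} g"
    and D: "\<And>t \<epsilon>. a \<le> t \<Longrightarrow> t < b \<Longrightarrow> \<epsilon> > 0 \<Longrightarrow> eventually (\<lambda>s. g s \<le> g t + \<epsilon>*(s-t)) (at_right t)"
    and e: "\<epsilon> > 0"
  shows "g b \<le> g a + \<epsilon> * (b - a)"
proof -
  define S where "S = {a..b} \<inter> (\<lambda>s. g s - \<epsilon>*(s-a)) -` {..g a}"
  have cc: "continuous_on {a..b} (\<lambda>s. g s - \<epsilon>*(s-a))" by (intro continuous_intros cont)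
  have cS: "closed S" unfolding S_def
    by (rule continuous_closed_preimage[OF cc closed_atLeastAtMost closed_atMost])
  have aS: "a \<in> S" using ab unfolding S_def by auto
  have bdd: "bdd_above S" unfolding S_def by (auto intro: bdd_aboveI[of _ b])
  define m where "m = Sup S"
  have mS: "m \<in> S" unfolding m_def using cS aS bdd closed_contains_Sup by blast
  have mb: "m \<le> b" using mS unfolding S_def by auto
  have am: "a \<le> m" using aS bdd unfolding m_def by (simp add: cSup_upper)
  show ?thesis
  proof (cases "m = b")
    case True then show ?thesis using mS unfolding S_def by auto
  next
    case False
    hence mb': "m < b" using mb by auto
    have ev: "eventually (\<lambda>s. g s \<le> g m + \<epsilon>*(s-m) \<and> s < b) (at_right m)"
    proof (rule eventually_conj)
      show "eventually (\<lambda>s. g s \<le> g m + \<epsilon>*(s-m)) (at_right m)" using D[OF am mb' e] .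
      show "eventually (\<lambda>s. s < b) (at_right m)" using mb' unfolding eventually_at_right_field by auto
    qed
    then obtain c where c: "c > m" "\<And>y. m < y \<Longrightarrow> y < c \<Longrightarrow> g y \<le> g m + \<epsilon>*(y-m) \<and> y < b"
      unfolding eventually_at_right_field by blast
    define y where "y = (m + c)/2"
    have y: "m < y" "y < c" using c by (auto simp: y_def)
    from c(2)[OF y] have gy: "g y \<le> g m + \<epsilon>*(y-m)" "y < b" by auto
    have "g m \<le> g a + \<epsilon>*(m-a)" using mS unfolding S_def by auto
    hence "y \<in> S" using gy y am unfolding S_def by (auto simp: algebra_simps)
    hence "y \<le> m" unfolding m_def using bdd by (simp add: cSup_upper)
    then show ?thesis using y by auto
  qed
qed

lemma mono_right:
  fixes g :: "real \<Rightarrow> real"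
  assumes ab: "a \<le> b" and cont: "continuous_on {a..b} g"
    and D: "\<And>t \<epsilon>. a < t \<Longrightarrow> t < b \<Longrightarrow> \<epsilon> > 0 \<Longrightarrow> eventually (\<lambda>s. g s \<le> g t + \<epsilon>*(s-t)) (at_right t)"
  shows "g b \<le> g a"
proof (cases "a = b")
  case True then show ?thesis by simp
next
  case False
  hence ab': "a < b" using ab by auto
  have key: "g b \<le> g a'" if a': "a < a'" "a' < b" for a'
  proof -
    have "\<forall>\<epsilon>>0. g b \<le> g a' + \<epsilon> * (b - a')"
    proof (intro allI impI)
      fix \<epsilon> :: real assume e: "\<epsilon> > 0"
      show "g b \<le> g a' + \<epsilon> * (b - a')"
        by (rule mono_right_aux[OF a'(2) continuous_on_subset[OF cont] _ e])
           (use a' in \<open>auto intro: D\<close>)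
    qed
    then show ?thesis
    proof -
      assume H: "\<forall>\<epsilon>>0. g b \<le> g a' + \<epsilon> * (b - a')"
      show ?thesis
      proof (rule field_le_epsilon)
        fix e :: real assume "0 < e"
        hence "e/(b-a') > 0" using a' by auto
        with H have "g b \<le> g a' + e/(b-a') * (b - a')" by blast
        thus "g b \<le> g a' + e" using a' by simp
      qed
    qed
  qed
  have lim: "(g \<longlongrightarrow> g a) (at_right a)"
  proof -
    have "(g \<longlongrightarrow> g a) (at a within {a..b})" using cont ab by (simp add: continuous_on_def)
    thus ?thesis using at_within_Icc_at_right[OF ab'] by simp
  qed
  show ?thesis
  proof (rule tendsto_le[OF trivial_limit_at_right_real lim tendsto_const])
    show "eventually (\<lambda>x. g b \<le> g x) (at_right a)"
      using eventually_at_right_less[of a] ab'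
      unfolding eventually_at_right_field
      by (intro exI[of _ b]) (auto intro: key)
  qed
qed


lemma vdq:
  fixes f :: "real \<Rightarrow> 'b::real_normed_vector"
  assumes "(f has_vector_derivative f') (at x within S)"
  shows "((\<lambda>y. inverse (y - x) *\<^sub>R (f y - f x)) \<longlongrightarrow> f') (at x within S)"
proof -
  have "((\<lambda>y. norm ((f y - f x) - (y - x) *\<^sub>R f') / norm (y - x)) \<longlongrightarrow> 0) (at x within S)"
    using assms unfolding has_vector_derivative_def has_derivative_iff_norm by auto
  moreover have "eventually (\<lambda>y. norm ((f y - f x) - (y - x) *\<^sub>R f') / norm (y - x)
      = norm (inverse (y - x) *\<^sub>R (f y - f x) - f')) (at x within S)"
  proof -
    have "eventually (\<lambda>y. y \<noteq> x) (at x within S)" by (simp add: eventually_at_filter)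
    then show ?thesis
    proof eventually_elim
      case (elim y)
      have "inverse (y - x) *\<^sub>R (f y - f x) - f' = inverse (y - x) *\<^sub>R ((f y - f x) - (y - x) *\<^sub>R f')"
      proof -
        have "inverse (y - x) *\<^sub>R ((y - x) *\<^sub>R f') = f'" using elim by simp
        then show ?thesis by (simp add: scaleR_diff_right)
      qed
      then show ?case by (simp add: divide_inverse abs_inverse mult.commute)
    qed
  qed
  ultimately have "((\<lambda>y. norm (inverse (y - x) *\<^sub>R (f y - f x) - f')) \<longlongrightarrow> 0) (at x within S)"
    using Lim_transform_eventually by fastforce
  then show ?thesis using tendsto_norm_zero_iff[of "\<lambda>y. inverse (y - x) *\<^sub>R (f y - f x) - f'"]
    by (simp add: LIM_zero_iff)
qed

lemma dini_le:
  fixes g G :: "real \<Rightarrow> real"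
  assumes "(G has_real_derivative D) (at t within {t..})" "D \<le> 0" "g t = G t"
    "eventually (\<lambda>s. g s \<le> G s) (at_right t)" "\<epsilon> > 0"
  shows "eventually (\<lambda>s. g s \<le> g t + \<epsilon>*(s-t)) (at_right t)"
proof -
  have "(G has_real_derivative D) (at_right t)"
    using assms(1) by (rule has_field_derivative_subset) auto
  hence "((\<lambda>y. (G y - G t) / (y - t)) \<longlongrightarrow> D) (at_right t)"
    by (simp add: has_field_derivative_iff)
  hence "eventually (\<lambda>y. (G y - G t) / (y - t) < D + \<epsilon>) (at_right t)"
    using assms(5) by (intro order_tendstoD) auto
  moreover have "eventually (\<lambda>y. y > t) (at_right t)" by (simp add: eventually_at_right_field) (auto intro: gt_ex)
  ultimately show ?thesis using assms(4)
  proof eventually_elim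
    case (elim s)
    have "G s - G t < (D + \<epsilon>) * (s - t)" using elim by (simp add: pos_divide_less_eq)
    also have "\<dots> \<le> \<epsilon> * (s - t)" using elim assms(2) by (intro mult_right_mono) auto
    finally show ?case using elim assms(3) by linarith
  qed
qed

locale hom =
  fixes J :: "'a::{real_inner,complete_space} \<Rightarrow> ereal" and p :: real
  assumes convex: "ereal_convex J" and proper: "ereal_proper J"
    and homog: "abs_p_homogeneous p J" and p1: "1 \<le> p"
begin

lemma J0: "J 0 = 0" using homog by (simp add: abs_p_homogeneous_def)

lemma Jscale: "c \<noteq> 0 \<Longrightarrow> J (c *\<^sub>R x) = ereal (\<bar>c\<bar> powr p) * J x"
  using homog by (simp add: abs_p_homogeneous_def)

lemma Jscale_pos: "c > 0 \<Longrightarrow> J (c *\<^sub>R x) = ereal (c powr p) * J x"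
  using Jscale[of c x] by simp

lemma Jneg: "J (- x) = J x"
  using Jscale[of "-1" x] by simp

lemma Jnotm: "J x \<noteq> -\<infinity>" using proper by (simp add: ereal_proper_def)

lemma Jnonneg: "J x \<ge> 0"
proof -
  have "J ((1/2) *\<^sub>R x + (1 - 1/2) *\<^sub>R (-x)) \<le> ereal (1/2) * J x + ereal (1 - 1/2) * J (-x)"
    using convex unfolding ereal_convex_def by (metis divide_nonneg_nonneg less_eq_real_def
      zero_le_numeral zero_less_one divide_le_eq_1_pos one_le_numeral zero_less_numeral)
  hence "0 \<le> ereal (1/2) * J x + ereal (1/2) * J x" using J0 Jneg by (simp add: scaleR_minus_right)
  then show ?thesis using Jnotm[of x]
    by (cases "J x") (auto simp: ereal_max[symmetric])
qed

lemma subdiff_fin: assumes "\<zeta> \<in> subdiff J x" shows "J x \<noteq> \<infinity>"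
proof -
  obtain v where v: "J v \<noteq> \<infinity>" using proper by (auto simp: ereal_proper_def)
  have "J x + ereal (\<zeta> \<bullet> (v - x)) \<le> J v" using assms by (auto simp: subdiff_def)
  then show ?thesis using v by auto
qed

lemma subdiff_real: assumes "\<zeta> \<in> subdiff J x" shows "J x = ereal (real_of_ereal (J x))"
  using subdiff_fin[OF assms] Jnotm[of x] by (cases "J x") auto

lemma subgrad:
  assumes "\<zeta> \<in> subdiff J x" "J v \<noteq> \<infinity>"
  shows "real_of_ereal (J x) + \<zeta> \<bullet> (v - x) \<le> real_of_ereal (J v)"
proof -
  have "J x + ereal (\<zeta> \<bullet> (v - x)) \<le> J v" using assms by (auto simp: subdiff_def)
  then show ?thesis using subdiff_real[OF assms(1)] assms(2) Jnotm[of v]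
    by (cases "J v") (auto, metis ereal_less_eq(3) plus_ereal.simps(1))
qed

lemma monotone:
  assumes "\<zeta>1 \<in> subdiff J x1" "\<zeta>2 \<in> subdiff J x2"
  shows "(\<zeta>1 - \<zeta>2) \<bullet> (x1 - x2) \<ge> 0"
proof -
  have "real_of_ereal (J x1) + \<zeta>1 \<bullet> (x2 - x1) \<le> real_of_ereal (J x2)"
    by (rule subgrad[OF assms(1) subdiff_fin[OF assms(2)]])
  moreover have "real_of_ereal (J x2) + \<zeta>2 \<bullet> (x1 - x2) \<le> real_of_ereal (J x1)"
    by (rule subgrad[OF assms(2) subdiff_fin[OF assms(1)]])
  ultimately show ?thesis by (simp add: inner_diff_left inner_diff_right)
qed

end


context hom begin

lemma euler:
  assumes z: "\<zeta> \<in> subdiff J x"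
  shows "\<zeta> \<bullet> x = p * real_of_ereal (J x)"
proof -
  define r where "r = real_of_ereal (J x)"
  have Jx: "J x = ereal r" using subdiff_real[OF z] r_def by simp
  have ineq: "r + (c - 1) * (\<zeta> \<bullet> x) \<le> c powr p * r" if c: "c > 0" for c
  proof -
    have Jc: "J (c *\<^sub>R x) = ereal (c powr p * r)" using Jscale_pos[OF c, of x] Jx by simp
    have "r + \<zeta> \<bullet> (c *\<^sub>R x - x) \<le> real_of_ereal (J (c *\<^sub>R x))"
      using subgrad[OF z, of "c *\<^sub>R x"] Jc r_def by simp
    then show ?thesis using Jc by (simp add: inner_diff_right algebra_simps)
  qed
  define Q where "Q c = (c powr p - 1) / (c - 1) * r" for c :: real
  have "((\<lambda>c::real. c powr p) has_real_derivative p * 1 powr (p - 1)) (at 1)"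
    by (rule has_real_derivative_powr) simp
  hence "((\<lambda>c. (c powr p - 1 powr p) / (c - 1)) \<longlongrightarrow> p * 1 powr (p - 1)) (at 1)"
    by (simp add: has_field_derivative_iff)
  hence "((\<lambda>c. (c powr p - 1) / (c - 1)) \<longlongrightarrow> p) (at 1)" by simp
  hence QL: "(Q \<longlongrightarrow> p * r) (at 1)" unfolding Q_def by (intro tendsto_intros)
  have QR: "(Q \<longlongrightarrow> p * r) (at_right 1)" by (rule tendsto_within_subset[OF QL]) auto
  have QLe: "(Q \<longlongrightarrow> p * r) (at_left 1)" by (rule tendsto_within_subset[OF QL]) auto
  have le: "\<zeta> \<bullet> x \<le> p * r"
  proof (rule tendsto_le[OF trivial_limit_at_right_real QR tendsto_const])
    show "eventually (\<lambda>c. \<zeta> \<bullet> x \<le> Q c) (at_right 1)"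
      unfolding eventually_at_right_field
    proof (intro exI[of _ 2] conjI allI impI)
      fix c :: real assume c: "1 < c" "c < 2"
      have "(c - 1) * (\<zeta> \<bullet> x) \<le> (c powr p - 1) * r" using ineq[of c] c by (simp add: algebra_simps)
      then show "\<zeta> \<bullet> x \<le> Q c" unfolding Q_def using c by (simp add: pos_le_divide_eq mult.commute)
    qed simp
  qed
  have ge: "p * r \<le> \<zeta> \<bullet> x"
  proof (rule tendsto_le[OF trivial_limit_at_left_real tendsto_const QLe])
    show "eventually (\<lambda>c. Q c \<le> \<zeta> \<bullet> x) (at_left 1)"
      unfolding eventually_at_left_field
    proof (intro exI[of _ "1/2"] conjI allI impI)
      fix c :: real assume c: "1/2 < c" "c < 1"
      have "(c powr p - 1) * r \<ge> (c - 1) * (\<zeta> \<bullet> x)" using ineq[of c] c by (simp add: algebra_simps)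
      hence "(1 - c powr p) * r \<le> (1 - c) * (\<zeta> \<bullet> x)" by (simp add: algebra_simps)
      hence "(1 - c powr p) / (1 - c) * r \<le> \<zeta> \<bullet> x" using c by (simp add: divide_le_eq mult.commute)
      moreover have "(c powr p - 1) / (c - 1) = (1 - c powr p) / (1 - c)"
        by (metis minus_diff_eq minus_divide_divide)
      ultimately show "Q c \<le> \<zeta> \<bullet> x" unfolding Q_def by simp
    qed simp
  qed
  from le ge show ?thesis unfolding r_def by simp
qed

lemma null_le:
  assumes n: "J n = 0"
  shows "J (x + n) \<le> J x"
proof (cases "J x = \<infinity>")
  case True then show ?thesis by simp
next
  case False
  then obtain r where r: "J x = ereal r" using Jnotm[of x] by (cases "J x") auto
  have b: "J (x + n) \<le> ereal (t powr (1 - p) * r)" if t: "0 < t" "t < 1" for t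
  proof -
    have "x + n = t *\<^sub>R ((1/t) *\<^sub>R x) + (1 - t) *\<^sub>R ((1/(1-t)) *\<^sub>R n)" using t by simp
    hence "J (x + n) \<le> ereal t * J ((1/t) *\<^sub>R x) + ereal (1 - t) * J ((1/(1-t)) *\<^sub>R n)"
      using convex t unfolding ereal_convex_def by (metis less_eq_real_def)
    also have "J ((1/t) *\<^sub>R x) = ereal ((1/t) powr p * r)" using Jscale_pos[of "1/t" x] t r by simp
    also have "J ((1/(1-t)) *\<^sub>R n) = 0" using Jscale_pos[of "1/(1-t)" n] t n by simp
    also have "(1/t) powr p = t powr (-p)" using t by (simp add: powr_divide powr_minus_divide)
    also have "ereal t * ereal (t powr - p * r) + ereal (1 - t) * 0 = ereal (t powr (1 - p) * r)"
    proof -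
      have "t powr (1 - p) = t powr (1 + (-p))" by simp
      also have "\<dots> = t powr 1 * t powr (-p)" by (rule powr_add)
      also have "t powr 1 = t" using t by simp
      finally show ?thesis by simp
    qed
    finally show ?thesis .
  qed
  have fin: "J (x + n) \<noteq> \<infinity>" using b[of "1/2"] by auto
  then obtain y where y: "J (x + n) = ereal y" using Jnotm[of "x+n"] by (cases "J (x + n)") auto
  have "y \<le> r"
  proof (rule tendsto_le[OF trivial_limit_at_left_real _ tendsto_const])
    show "((\<lambda>t. t powr (1 - p) * r) \<longlongrightarrow> r) (at_left 1)"
    proof -
      have "((\<lambda>t. t powr (1 - p) * r) \<longlongrightarrow> 1 powr (1 - p) * r) (at_left 1)"
        by (intro tendsto_intros) auto
      then show ?thesis by simp
    qed
    show "eventually (\<lambda>t. y \<le> t powr (1 - p) * r) (at_left 1)"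
      unfolding eventually_at_left_field using b y
      by (intro exI[of _ 0]) auto
  qed
  then show ?thesis using y r by simp
qed

lemma null_scale: "J n = 0 \<Longrightarrow> J (c *\<^sub>R n) = 0"
  using Jscale[of c n] by (cases "c = 0") (auto simp: J0)

lemma null_eq: "J n = 0 \<Longrightarrow> J (x + n) = J x"
proof -
  assume n: "J n = 0"
  have "J ((x + n) + (- n)) \<le> J (x + n)" by (rule null_le) (use n Jneg in auto)
  then show ?thesis using null_le[OF n, of x] by simp
qed

lemma subdiff_null:
  assumes z: "\<zeta> \<in> subdiff J x" and n: "J n = 0"
  shows "\<zeta> \<bullet> n = 0"
proof -
  have h: "real_of_ereal (J x) + \<zeta> \<bullet> ((x + c *\<^sub>R n) - x) \<le> real_of_ereal (J (x + c *\<^sub>R n))" for c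
    using subgrad[OF z, of "x + c *\<^sub>R n"] null_eq[OF null_scale[OF n, of c], of x] subdiff_fin[OF z]
    by simp
  have "c * (\<zeta> \<bullet> n) \<le> 0" for c using h[of c] null_eq[OF null_scale[OF n, of c], of x] by simp
  from this[of 1] this[of "-1"] show ?thesis by simp
qed

end


lemma para: "norm (a - b)^2 = 2 * norm a ^2 + 2 * norm (b::'a::real_inner) ^2 - 4 * norm ((1/2) *\<^sub>R (a + b))^2"
  by (simp add: power2_norm_eq_inner inner_diff_left inner_diff_right inner_add_left inner_add_right
      algebra_simps inner_commute)

lemma lin4: "(dn::real) \<le> C \<Longrightarrow> D = 2*A+2*B-4*C \<Longrightarrow> A < dn + e1 \<Longrightarrow> B < dk + e2 \<Longrightarrow> D \<le> 2*(dk-dn) + 2*e1 + 2*e2"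
  by (smt (verit))

lemma lin5: "(xx::real) \<le> 2 * c + 2 * uu + 2 * vv \<Longrightarrow> abs c < ee / 8 \<Longrightarrow> 0 < ee \<Longrightarrow> uu < ee / 8 \<Longrightarrow> vv < ee / 8 \<Longrightarrow> xx < ee"
proof -
  assume h: "xx \<le> 2 * c + 2 * uu + 2 * vv" "abs c < ee / 8" "0 < ee" "uu < ee / 8" "vv < ee / 8"
  from h(2) have "c < ee / 8" by (simp add: abs_less_iff)
  with h(1,3,4,5) show "xx < ee" by linarith
qed

context hom begin

definition esub :: "real \<Rightarrow> 'a \<Rightarrow> 'a set" where
  "esub \<epsilon> x = {\<xi>. \<forall>v. J v \<noteq> \<infinity> \<longrightarrow> real_of_ereal (J x) + \<xi> \<bullet> (v - x) \<le> real_of_ereal (J v) + \<epsilon>}"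

lemma esub_mono: "\<epsilon> \<le> \<epsilon>' \<Longrightarrow> esub \<epsilon> x \<subseteq> esub \<epsilon>' x"
proof
  fix \<xi> assume e: "\<epsilon> \<le> \<epsilon>'" and x: "\<xi> \<in> esub \<epsilon> x"
  show "\<xi> \<in> esub \<epsilon>' x" unfolding esub_def
  proof (safe)
    fix v assume "J v \<noteq> \<infinity>"
    with x have "real_of_ereal (J x) + \<xi> \<bullet> (v - x) \<le> real_of_ereal (J v) + \<epsilon>" unfolding esub_def by auto
    with e show "real_of_ereal (J x) + \<xi> \<bullet> (v - x) \<le> real_of_ereal (J v) + \<epsilon>'" by linarith
  qed
qed

lemma esub_mid:
  assumes h1: "\<xi>1 \<in> esub \<epsilon> x" and h2: "\<xi>2 \<in> esub \<epsilon> x"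
  shows "(1/2) *\<^sub>R (\<xi>1 + \<xi>2) \<in> esub \<epsilon> x"
  unfolding esub_def
proof (intro CollectI allI impI)
  fix v assume v: "J v \<noteq> \<infinity>"
  from h1 v have a: "real_of_ereal (J x) + \<xi>1 \<bullet> (v - x) \<le> real_of_ereal (J v) + \<epsilon>" unfolding esub_def by auto
  from h2 v have b: "real_of_ereal (J x) + \<xi>2 \<bullet> (v - x) \<le> real_of_ereal (J v) + \<epsilon>" unfolding esub_def by auto
  have eq: "(1/2) *\<^sub>R (\<xi>1 + \<xi>2) \<bullet> (v - x) = (1/2) * (\<xi>1 \<bullet> (v - x)) + (1/2) * (\<xi>2 \<bullet> (v - x))"
    by (simp add: inner_add_left algebra_simps)
  show "real_of_ereal (J x) + (1/2) *\<^sub>R (\<xi>1 + \<xi>2) \<bullet> (v - x) \<le> real_of_ereal (J v) + \<epsilon>"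
    unfolding eq using a b by linarith
qed

lemma subdiff_esub: "\<zeta> \<in> subdiff J x \<Longrightarrow> 0 \<le> \<epsilon> \<Longrightarrow> \<zeta> \<in> esub \<epsilon> x"
  unfolding esub_def using subgrad by fastforce

lemma esub_approx:
  assumes mn: "min_norm_elem \<zeta> (subdiff J x)" and eta: "\<eta> > 0"
  shows "\<exists>\<epsilon>>0. \<forall>\<xi>\<in>esub \<epsilon> x. norm \<xi> \<le> norm \<zeta> \<longrightarrow> norm (\<xi> - \<zeta>) < \<eta>"
proof (rule ccontr)
  assume H: "\<not> ?thesis"
  have z: "\<zeta> \<in> subdiff J x" using mn by (simp add: min_norm_elem_def)
  define N where "N = norm \<zeta>"
  define M where "M = N^2 - \<eta>^2/4"
  have A: "\<exists>y\<in>esub \<epsilon> x. norm y ^2 \<le> M" if e: "\<epsilon> > 0" for \<epsilon>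
  proof -
    obtain \<xi> where xi: "\<xi> \<in> esub \<epsilon> x" "norm \<xi> \<le> N" "norm (\<xi> - \<zeta>) \<ge> \<eta>"
    proof -
      from H e have "\<exists>\<xi>\<in>esub \<epsilon> x. norm \<xi> \<le> norm \<zeta> \<and> \<not> norm (\<xi> - \<zeta>) < \<eta>" by blast
      then show ?thesis using that unfolding N_def by (auto simp: not_less)
    qed
    define m where "m = (1/2) *\<^sub>R (\<xi> + \<zeta>)"
    have m: "m \<in> esub \<epsilon> x" unfolding m_def
      by (rule esub_mid[OF xi(1) subdiff_esub[OF z]]) (use e in auto)
    have "\<eta>^2 \<le> norm (\<xi> - \<zeta>)^2" using xi(3) eta by (simp add: power_mono)
    also have "\<dots> = 2 * norm \<xi> ^2 + 2 * N ^2 - 4 * norm m ^2" unfolding m_def N_def by (rule para)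
    also have "norm \<xi> ^2 \<le> N^2" using xi(2) by (simp add: power_mono)
    finally have "norm m ^2 \<le> M" unfolding M_def by simp
    with m show ?thesis by blast
  qed
  define E where "E n = esub (1 / real (Suc n)) x" for n
  define d where "d n = Inf ((\<lambda>y. norm y ^2) ` E n)" for n
  have Ene: "E n \<noteq> {}" for n using subdiff_esub[OF z, of "1/real(Suc n)"] unfolding E_def by auto
  have bdd: "bdd_below ((\<lambda>y. norm y ^2) ` E n)" for n by (rule bdd_belowI[of _ 0]) auto
  have Emono: "n \<le> k \<Longrightarrow> E k \<subseteq> E n" for n k unfolding E_def
    by (rule esub_mono) (simp add: frac_le)
  have dM: "d n \<le> M" for n
  proof -
    obtain y where "y \<in> E n" "norm y ^2 \<le> M" using A[of "1 / real (Suc n)"] unfolding E_def by auto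
    then show ?thesis unfolding d_def using bdd[of n] by (meson cInf_lower image_eqI order_trans)
  qed
  have dmono: "incseq d" unfolding incseq_def d_def
  proof (intro allI impI cInf_superset_mono)
    fix m n :: nat assume mn: "m \<le> n"
    show "(\<lambda>y. norm y^2) ` E n \<noteq> {}" using Ene by auto
    show "bdd_below ((\<lambda>y. norm y ^2) ` E m)" by (rule bdd)
    show "(\<lambda>y. norm y^2) ` E n \<subseteq> (\<lambda>y. norm y^2) ` E m" using Emono[OF mn] by (rule image_mono)
  qed
  have dle: "d n \<le> norm y ^2" if "y \<in> E n" for n y
    unfolding d_def using bdd[of n] that by (simp add: cInf_lower)
  have "\<forall>n. \<exists>y. y \<in> E n \<and> norm y ^2 < d n + 1 / real (Suc n)"
  proof
    fix n
    have lt: "Inf ((\<lambda>y. norm y ^2) ` E n) < d n + 1 / real (Suc n)" unfolding d_def by simp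
    have ne: "(\<lambda>y. norm y ^2) ` E n \<noteq> {}" using Ene by auto
    from cInf_lessD[OF ne lt] obtain r where "r \<in> (\<lambda>y. norm y ^2) ` E n" "r < d n + 1 / real (Suc n)"
      by blast
    then show "\<exists>y. y \<in> E n \<and> norm y ^2 < d n + 1 / real (Suc n)" by auto
  qed
  from choice[OF this] obtain y where y': "\<forall>n. y n \<in> E n \<and> norm (y n) ^2 < d n + 1 / real (Suc n)"
    by blast
  have y: "\<And>n. y n \<in> E n" "\<And>n. norm (y n) ^2 < d n + 1 / real (Suc n)" using y' by auto
  obtain dl where dl: "d \<longlonglongrightarrow> dl" using incseq_convergent[OF dmono, of M] dM by blast
  have dC: "Cauchy d" using dl by (rule LIMSEQ_imp_Cauchy)
  have bnd: "norm (y n - y k)^2 \<le> 2 * (d k - d n) + 2 * (1 / real (Suc n)) + 2 * (1 / real (Suc k))"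
    if nk: "n \<le> k" for n k
  proof -
    have "y k \<in> E n" using Emono[OF nk] y(1) by auto
    hence "(1/2) *\<^sub>R (y n + y k) \<in> E n" using y(1)[of n] unfolding E_def by (rule esub_mid[rotated])
    hence "d n \<le> norm ((1/2) *\<^sub>R (y n + y k))^2" by (rule dle)
    from lin4[OF this para[of "y n" "y k"] y(2)[of n] y(2)[of k]] show ?thesis .
  qed
  have yC: "Cauchy y"
  proof (rule metric_CauchyI)
    fix e :: real assume e: "e > 0"
    obtain K1 where K1: "\<And>m n. m \<ge> K1 \<Longrightarrow> n \<ge> K1 \<Longrightarrow> dist (d m) (d n) < e^2/8"
      using metric_CauchyD[OF dC, of "e^2/8"] e by auto
    obtain K2 where K2: "1 / real (Suc K2) < e^2/8"
      using reals_Archimedean[of "e^2/8"] e by (auto simp: inverse_eq_divide)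
    define K where "K = max K1 K2"
    have "dist (y m) (y n) < e" if mn: "m \<ge> K" "n \<ge> K" for m n
    proof -
      have inv: "1 / real (Suc i) < e^2/8" if "i \<ge> K" for i
      proof -
        have "1 / real (Suc i) \<le> 1 / real (Suc K2)" using that unfolding K_def by (simp add: frac_le)
        then show ?thesis using K2 by linarith
      qed
      have sq: "norm (y m - y n)^2 < e^2"
      proof (cases "m \<le> n")
        case True
        have "norm (y m - y n)^2 \<le> 2 * (d n - d m) + 2 * (1 / real (Suc m)) + 2 * (1 / real (Suc n))" by (rule bnd[OF True])
        moreover have "\<bar>d n - d m\<bar> < e^2/8" using K1[of n m] mn unfolding K_def by (simp add: dist_real_def)
        moreover have "e^2 > 0" using e by simp
        ultimately show ?thesis using inv[OF mn(1)] inv[OF mn(2)] by (rule lin5)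
      next
        case False
        have "norm (y n - y m)^2 \<le> 2 * (d m - d n) + 2 * (1 / real (Suc n)) + 2 * (1 / real (Suc m))" by (rule bnd) (use False in auto)
        moreover have "\<bar>d m - d n\<bar> < e^2/8" using K1[of m n] mn unfolding K_def by (simp add: dist_real_def)
        moreover have "e^2 > 0" using e by simp
        ultimately have "norm (y n - y m)^2 < e^2" using inv[OF mn(2)] inv[OF mn(1)] by (rule lin5)
        moreover have "norm (y n - y m) = norm (y m - y n)" by (rule norm_minus_commute)
        ultimately show ?thesis by simp
      qed
      have "norm (y m - y n) < e" using sq e by (meson abs_of_nonneg norm_ge_zero power_less_imp_less_base less_imp_le)
      then show ?thesis by (simp add: dist_norm)
    qed
    then show "\<exists>K. \<forall>m\<ge>K. \<forall>n\<ge>K. dist (y m) (y n) < e" by blast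
  qed
  then obtain L where L: "y \<longlonglongrightarrow> L" using Cauchy_convergent_iff convergent_def by blast
  have inv0: "(\<lambda>n. 1 / real (Suc n)) \<longlonglongrightarrow> 0"
    using LIMSEQ_inverse_real_of_nat by (simp add: inverse_eq_divide)
  have Lsub: "L \<in> subdiff J x"
    unfolding subdiff_def
  proof (safe)
    fix v
    show "J x + ereal (L \<bullet> (v - x)) \<le> J v"
    proof (cases "J v = \<infinity>")
      case True then show ?thesis by simp
    next
      case False
      have "real_of_ereal (J x) + L \<bullet> (v - x) \<le> real_of_ereal (J v) + 0"
      proof (rule tendsto_le[OF trivial_limit_sequentially])
        show "(\<lambda>n. real_of_ereal (J v) + 1 / real (Suc n)) \<longlonglongrightarrow> real_of_ereal (J v) + 0"
          by (intro tendsto_intros inv0)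
        show "(\<lambda>n. real_of_ereal (J x) + y n \<bullet> (v - x)) \<longlonglongrightarrow> real_of_ereal (J x) + L \<bullet> (v - x)"
          by (intro tendsto_intros L)
        show "eventually (\<lambda>n. real_of_ereal (J x) + y n \<bullet> (v - x) \<le> real_of_ereal (J v) + 1 / real (Suc n)) sequentially"
          using y(1) False unfolding E_def esub_def by auto
      qed
      then show ?thesis using subdiff_real[OF z] False Jnotm[of v]
        by (cases "J v") (auto, metis ereal_less_eq(3) plus_ereal.simps(1))
    qed
  qed
  have "norm L ^2 \<le> M + 0"
  proof (rule tendsto_le[OF trivial_limit_sequentially])
    show "(\<lambda>n. M + 1 / real (Suc n)) \<longlonglongrightarrow> M + 0" by (intro tendsto_intros inv0)
    show "(\<lambda>n. norm (y n) ^2) \<longlonglongrightarrow> norm L ^2" by (intro tendsto_intros L)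
    show "eventually (\<lambda>n. norm (y n) ^2 \<le> M + 1 / real (Suc n)) sequentially"
    proof (rule always_eventually, rule allI)
      fix n
      show "norm (y n) ^2 \<le> M + 1 / real (Suc n)" using y(2)[of n] dM[of n] by linarith
    qed
  qed
  moreover have "N \<le> norm L" using mn Lsub unfolding min_norm_elem_def N_def by auto
  hence "N^2 \<le> norm L ^2" by (rule power_mono) (simp add: N_def)
  moreover have "\<eta>^2 > 0" using eta by simp
  ultimately show False unfolding M_def by linarith
qed

end


locale flow = hom J p for J :: "'a::{real_inner,complete_space} \<Rightarrow> ereal" and p +
  fixes u :: "real \<Rightarrow> 'a" and f :: 'a
  assumes gf: "gradient_flow J f u"
begin

definition Z where
  "Z t = (SOME \<zeta>. min_norm_elem \<zeta> (subdiff J (u t)) \<and> (u has_vector_derivative - \<zeta>) (at t within {t..}))"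

definition j where "j t = real_of_ereal (J (u t))"

lemma Zprop: "t > 0 \<Longrightarrow> min_norm_elem (Z t) (subdiff J (u t)) \<and> (u has_vector_derivative - Z t) (at t within {t..})"
  unfolding Z_def by (rule someI_ex) (use gf in \<open>auto simp: gradient_flow_def\<close>)

lemma Zmin: "t > 0 \<Longrightarrow> min_norm_elem (Z t) (subdiff J (u t))" using Zprop by blast
lemma Zsub: "t > 0 \<Longrightarrow> Z t \<in> subdiff J (u t)" using Zmin by (simp add: min_norm_elem_def)
lemma uder: "t > 0 \<Longrightarrow> (u has_vector_derivative - Z t) (at t within {t..})" using Zprop by blast
lemma ucont: "continuous_on {0..} u" using gf by (simp add: gradient_flow_def)
lemma u0: "u 0 = f" using gf by (simp add: gradient_flow_def)

lemma ucont_at: "t \<ge> 0 \<Longrightarrow> (u \<longlongrightarrow> u t) (at t within {0..})"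
  using ucont by (simp add: continuous_on_def)

lemma ucont_right: "t \<ge> 0 \<Longrightarrow> (u \<longlongrightarrow> u t) (at_right t)"
  by (rule tendsto_within_subset[OF ucont_at]) auto

lemma Ju: "t > 0 \<Longrightarrow> J (u t) = ereal (j t)"
  unfolding j_def using subdiff_real[OF Zsub] by simp

lemma j_nonneg: "j t \<ge> 0"
  unfolding j_def using Jnonneg[of "u t"] by (cases "J (u t)") auto

lemma euler_u: "t > 0 \<Longrightarrow> Z t \<bullet> u t = p * j t"
  unfolding j_def by (rule euler[OF Zsub])

lemma subgrad_u: "t > 0 \<Longrightarrow> J v \<noteq> \<infinity> \<Longrightarrow> j t + Z t \<bullet> (v - u t) \<le> real_of_ereal (J v)"
  unfolding j_def by (rule subgrad[OF Zsub])

lemma subgrad_uu: "t > 0 \<Longrightarrow> s > 0 \<Longrightarrow> j t + Z t \<bullet> (u s - u t) \<le> j s"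
proof -
  assume t: "t > 0" and s: "s > 0"
  have fin: "J (u s) \<noteq> \<infinity>" using Ju[OF s] by simp
  have "j t + Z t \<bullet> (u s - u t) \<le> real_of_ereal (J (u s))" by (rule subgrad_u[OF t fin])
  then show ?thesis by (simp add: j_def)
qed

lemma inner_der:
  assumes "(x has_vector_derivative x') (at t within S)" "(y has_vector_derivative y') (at t within S)"
  shows "((\<lambda>s. x s \<bullet> y s) has_real_derivative (x t \<bullet> y' + x' \<bullet> y t)) (at t within S)"
proof -
  have dx: "(x has_derivative (\<lambda>h. h *\<^sub>R x')) (at t within S)" using assms(1) by (simp add: has_vector_derivative_def)
  have dy: "(y has_derivative (\<lambda>h. h *\<^sub>R y')) (at t within S)" using assms(2) by (simp add: has_vector_derivative_def)
  have "((\<lambda>s. x s \<bullet> y s) has_derivative (\<lambda>h. x t \<bullet> (h *\<^sub>R y') + (h *\<^sub>R x') \<bullet> y t)) (at t within S)"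
    by (rule has_derivative_inner[OF dx dy])
  moreover have "(\<lambda>h. x t \<bullet> (h *\<^sub>R y') + (h *\<^sub>R x') \<bullet> y t) = (*) (x t \<bullet> y' + x' \<bullet> y t)"
    by (auto simp: fun_eq_iff algebra_simps)
  ultimately show ?thesis by (simp add: has_field_derivative_def)
qed

lemma nder: "t > 0 \<Longrightarrow> ((\<lambda>s. u s \<bullet> u s) has_real_derivative (- 2 * (p * j t))) (at t within {t..})"
  using inner_der[OF uder uder, of t] euler_u[of t] by (simp add: inner_commute)

lemma shift_der:
  assumes "t + h > 0"
  shows "((\<lambda>s. u (s + h)) has_vector_derivative - Z (t + h)) (at t within {t..})"
proof -
  have "((\<lambda>s. s + h) has_vector_derivative 1) (at t within {t..})"
    by (auto intro!: derivative_eq_intros simp: has_real_derivative_iff_has_vector_derivative[symmetric])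
  moreover have "(u has_vector_derivative - Z (t + h)) (at (t + h) within (\<lambda>s. s + h) ` {t..})"
  proof -
    have "(\<lambda>s. s + h) ` {t..} = {t + h..}" by (auto simp: image_iff intro!: bexI[of _ "_ - h"])
    then show ?thesis using uder[OF assms] by simp
  qed
  ultimately have "(u \<circ> (\<lambda>s. s + h) has_vector_derivative 1 *\<^sub>R - Z (t + h)) (at t within {t..})"
    by (rule vector_diff_chain_within)
  then show ?thesis by (simp add: o_def)
qed

lemma contraction:
  assumes h: "h \<ge> 0" and ab: "0 \<le> a" "a \<le> b"
  shows "norm (u (b + h) - u b) \<le> norm (u (a + h) - u a)"
proof -
  define g where "g s = (u (s + h) - u s) \<bullet> (u (s + h) - u s)" for s
  have cu: "continuous_on {a..b} u" by (rule continuous_on_subset[OF ucont]) (use ab in auto)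
  have cuh: "continuous_on {a..b} (\<lambda>s. u (s + h))"
    by (rule continuous_on_compose2[OF ucont, of _ "\<lambda>s. s + h"]) (use ab h in \<open>auto intro!: continuous_intros\<close>)
  have cg: "continuous_on {a..b} g" unfolding g_def by (intro continuous_intros cu cuh)
  have "g b \<le> g a"
  proof (rule mono_right[OF ab(2) cg])
    fix t \<epsilon> :: real assume t: "a < t" "t < b" and e: "\<epsilon> > 0"
    have t0: "t > 0" "t + h > 0" using t ab h by auto
    have dd: "((\<lambda>s. u (s + h) - u s) has_vector_derivative (- Z (t + h) - - Z t)) (at t within {t..})"
      by (intro has_vector_derivative_diff shift_der uder t0)
    have "(g has_real_derivative ((u (t + h) - u t) \<bullet> (- Z (t + h) - - Z t) + (- Z (t + h) - - Z t) \<bullet> (u (t + h) - u t))) (at t within {t..})"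
      unfolding g_def by (rule inner_der[OF dd dd])
    moreover have "(u (t + h) - u t) \<bullet> (- Z (t + h) - - Z t) + (- Z (t + h) - - Z t) \<bullet> (u (t + h) - u t)
        = - 2 * ((Z (t + h) - Z t) \<bullet> (u (t + h) - u t))"
      by (simp add: inner_commute algebra_simps inner_diff_left inner_diff_right)
    moreover have "(Z (t + h) - Z t) \<bullet> (u (t + h) - u t) \<ge> 0"
      by (rule monotone[OF Zsub Zsub]) (use t0 in auto)
    ultimately show "eventually (\<lambda>s. g s \<le> g t + \<epsilon> * (s - t)) (at_right t)"
      by (intro dini_le[OF _ _ refl _ e]) auto
  qed
  then show ?thesis unfolding g_def by (simp add: norm_le)
qed

lemma dq_norm:
  assumes "a > 0"
  shows "((\<lambda>h. norm (inverse h *\<^sub>R (u (a + h) - u a))) \<longlongrightarrow> norm (Z a)) (at_right 0)"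
proof -
  have fl: "filterlim (\<lambda>h. a + h) (at a within {a..}) (at_right 0)"
  proof (rule filterlim_at_withinI)
    show "filterlim (\<lambda>h. a + h) (nhds a) (at_right 0)"
      by (rule tendsto_within_subset[of _ _ _ UNIV]) (auto intro!: tendsto_eq_intros)
    show "eventually (\<lambda>h. a + h \<in> {a..} - {a}) (at_right 0)"
      by (simp add: eventually_at_right_field) (auto intro: exI[of _ 1])
  qed
  have "((\<lambda>y. inverse (y - a) *\<^sub>R (u y - u a)) \<longlongrightarrow> - Z a) (at a within {a..})"
    by (rule vdq[OF uder[OF assms]])
  from filterlim_compose[OF this fl]
  have "((\<lambda>h. inverse h *\<^sub>R (u (a + h) - u a)) \<longlongrightarrow> - Z a) (at_right 0)" by (simp add: o_def)
  from tendsto_norm[OF this] show ?thesis by simp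
qed

lemma Z_mono:
  assumes "0 < a" "a \<le> b"
  shows "norm (Z b) \<le> norm (Z a)"
proof (rule tendsto_le[OF trivial_limit_at_right_real dq_norm dq_norm])
  show "a > 0" "b > 0" using assms by auto
  show "eventually (\<lambda>h. norm (inverse h *\<^sub>R (u (b + h) - u b)) \<le> norm (inverse h *\<^sub>R (u (a + h) - u a))) (at_right 0)"
    unfolding eventually_at_right_field
  proof (intro exI[of _ 1] conjI allI impI)
    fix h :: real assume h: "0 < h" "h < 1"
    have "norm (u (b + h) - u b) \<le> norm (u (a + h) - u a)" by (rule contraction) (use assms h in auto)
    then show "norm (inverse h *\<^sub>R (u (b + h) - u b)) \<le> norm (inverse h *\<^sub>R (u (a + h) - u a))"
      using h by (simp add: mult_left_mono)
  qed simp
qed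

lemma Z_esub:
  assumes "t > 0" "s > 0" "norm (Z s) \<le> norm (Z t)"
  shows "Z s \<in> esub (2 * norm (Z t) * norm (u s - u t)) (u t)"
  unfolding esub_def
proof (intro CollectI allI impI)
  fix v assume v: "J v \<noteq> \<infinity>"
  have a: "j s + Z s \<bullet> (v - u s) \<le> real_of_ereal (J v)" by (rule subgrad_u[OF assms(2) v])
  have b: "j t + Z t \<bullet> (u s - u t) \<le> j s" by (rule subgrad_uu[OF assms(1,2)])
  have c1: "Z t \<bullet> (u t - u s) \<le> norm (Z t) * norm (u s - u t)"
    using norm_cauchy_schwarz[of "Z t" "u t - u s"] by (simp add: norm_minus_commute)
  have c2: "Z s \<bullet> (u s - u t) \<le> norm (Z t) * norm (u s - u t)"
  proof -
    have "Z s \<bullet> (u s - u t) \<le> norm (Z s) * norm (u s - u t)" by (rule norm_cauchy_schwarz)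
    also have "\<dots> \<le> norm (Z t) * norm (u s - u t)" by (rule mult_right_mono[OF assms(3)]) simp
    finally show ?thesis .
  qed
  have e1: "Z s \<bullet> (v - u t) = Z s \<bullet> (v - u s) + Z s \<bullet> (u s - u t)" by (simp add: inner_diff_right)
  have e2: "Z t \<bullet> (u s - u t) = - (Z t \<bullet> (u t - u s))" by (simp add: inner_diff_right)
  show "real_of_ereal (J (u t)) + Z s \<bullet> (v - u t) \<le> real_of_ereal (J v) + 2 * norm (Z t) * norm (u s - u t)"
    using a b c1 c2 e1 e2 unfolding j_def by linarith
qed

lemma Z_rcont:
  assumes t: "t > 0"
  shows "(Z \<longlongrightarrow> Z t) (at_right t)"
proof (rule tendstoI)
  fix \<eta> :: real assume eta: "\<eta> > 0"
  obtain \<epsilon> where e: "\<epsilon> > 0" and E: "\<And>\<xi>. \<xi> \<in> esub \<epsilon> (u t) \<Longrightarrow> norm \<xi> \<le> norm (Z t) \<Longrightarrow> norm (\<xi> - Z t) < \<eta>"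
    using esub_approx[OF Zmin[OF t] eta] by blast
  have ev1: "eventually (\<lambda>s. s > t) (at_right t)" by (simp add: eventually_at_filter)
  have "((\<lambda>s. 2 * norm (Z t) * norm (u s - u t)) \<longlongrightarrow> 2 * norm (Z t) * norm (u t - u t)) (at_right t)"
    by (intro tendsto_intros ucont_right) (use t in auto)
  hence "eventually (\<lambda>s. 2 * norm (Z t) * norm (u s - u t) < \<epsilon>) (at_right t)"
    using e by (intro order_tendstoD) auto
  with ev1 show "eventually (\<lambda>s. dist (Z s) (Z t) < \<eta>) (at_right t)"
  proof eventually_elim
    case (elim s)
    have s: "s > 0" "norm (Z s) \<le> norm (Z t)" using elim t Z_mono[of t s] by auto
    have "Z s \<in> esub (2 * norm (Z t) * norm (u s - u t)) (u t)" by (rule Z_esub[OF t s(1) s(2)])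
    moreover have "esub (2 * norm (Z t) * norm (u s - u t)) (u t) \<subseteq> esub \<epsilon> (u t)"
      by (rule esub_mono) (use elim in auto)
    ultimately have "Z s \<in> esub \<epsilon> (u t)" by auto
    then show ?case using E s(2) by (simp add: dist_norm)
  qed
qed

lemma j_lip:
  assumes "0 < a" "a \<le> s" "a \<le> t"
  shows "\<bar>j s - j t\<bar> \<le> norm (Z a) * norm (u s - u t)"
proof -
  have s: "s > 0" and t: "t > 0" using assms by auto
  have 1: "j s - j t \<le> norm (Z a) * norm (u s - u t)"
  proof -
    have "j s + Z s \<bullet> (u t - u s) \<le> j t" by (rule subgrad_uu[OF s t])
    moreover have "Z s \<bullet> (u s - u t) \<le> norm (Z a) * norm (u s - u t)"
    proof -
      have "Z s \<bullet> (u s - u t) \<le> norm (Z s) * norm (u s - u t)" by (rule norm_cauchy_schwarz)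
      also have "\<dots> \<le> norm (Z a) * norm (u s - u t)" by (rule mult_right_mono[OF Z_mono[OF assms(1,2)]]) simp
      finally show ?thesis .
    qed
    moreover have "Z s \<bullet> (u t - u s) = - (Z s \<bullet> (u s - u t))" by (simp add: inner_diff_right)
    ultimately show ?thesis by linarith
  qed
  have 2: "j t - j s \<le> norm (Z a) * norm (u s - u t)"
  proof -
    have "j t + Z t \<bullet> (u s - u t) \<le> j s" by (rule subgrad_uu[OF t s])
    moreover have "Z t \<bullet> (u t - u s) \<le> norm (Z a) * norm (u s - u t)"
    proof -
      have "Z t \<bullet> (u t - u s) \<le> norm (Z t) * norm (u t - u s)" by (rule norm_cauchy_schwarz)
      also have "\<dots> = norm (Z t) * norm (u s - u t)" by (simp add: norm_minus_commute)
      also have "\<dots> \<le> norm (Z a) * norm (u s - u t)" by (rule mult_right_mono[OF Z_mono[OF assms(1,3)]]) simp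
      finally show ?thesis .
    qed
    moreover have "Z t \<bullet> (u s - u t) = - (Z t \<bullet> (u t - u s))" by (simp add: inner_diff_right)
    ultimately show ?thesis by linarith
  qed
  from 1 2 show ?thesis by linarith
qed

lemma j_cont:
  assumes "0 < a"
  shows "continuous_on {a..b} j"
  unfolding continuous_on_def
proof
  fix x assume x: "x \<in> {a..b}"
  have ux: "(u \<longlongrightarrow> u x) (at x within {a..b})"
    by (rule tendsto_within_subset[OF ucont_at]) (use x assms in auto)
  have "((\<lambda>s. j s - j x) \<longlongrightarrow> 0) (at x within {a..b})"
  proof (rule tendsto_0_le[of "\<lambda>s. u s - u x" _ _ "norm (Z a)"])
    show "((\<lambda>s. u s - u x) \<longlongrightarrow> 0) (at x within {a..b})" using ux by (simp add: LIM_zero_iff)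
    show "eventually (\<lambda>s. norm (j s - j x) \<le> norm (u s - u x) * norm (Z a)) (at x within {a..b})"
      unfolding eventually_at_filter
      by (rule always_eventually) (use j_lip[OF assms] x in \<open>auto simp: mult.commute\<close>)
  qed
  then show "(j \<longlongrightarrow> j x) (at x within {a..b})" by (simp add: LIM_zero_iff)
qed

definition k where "k t s = j t + Z s \<bullet> (u s - u t)"

lemma j_le_k: "t > 0 \<Longrightarrow> s > 0 \<Longrightarrow> j s \<le> k t s"
  unfolding k_def using subgrad_uu[of s t] by (simp add: inner_diff_right)

lemma k_der:
  assumes t: "t > 0"
  shows "(k t has_real_derivative (- (norm (Z t) ^ 2))) (at t within {t..})"
  unfolding has_field_derivative_iff
proof -
  have "((\<lambda>y. Z y \<bullet> (inverse (y - t) *\<^sub>R (u y - u t))) \<longlongrightarrow> Z t \<bullet> (- Z t)) (at t within {t..})"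
    using Z_rcont[OF t] vdq[OF uder[OF t]] by (intro tendsto_intros) (auto simp: at_within_Ici_at_right)
  moreover have "eventually (\<lambda>y. Z y \<bullet> (inverse (y - t) *\<^sub>R (u y - u t)) = (k t y - k t t) / (y - t)) (at t within {t..})"
    by (rule always_eventually) (simp add: k_def divide_inverse mult.commute)
  ultimately have "((\<lambda>y. (k t y - k t t) / (y - t)) \<longlongrightarrow> Z t \<bullet> (- Z t)) (at t within {t..})"
    using Lim_transform_eventually by fastforce
  then show "((\<lambda>y. (k t y - k t t) / (y - t)) \<longlongrightarrow> (- (norm (Z t) ^ 2))) (at t within {t..})"
    by (simp add: power2_norm_eq_inner)
qed

end


lemma dini_self:
  fixes g :: "real \<Rightarrow> real"
  assumes "(g has_real_derivative D) (at t within {t..})" "D \<le> 0" "\<epsilon> > 0"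
  shows "eventually (\<lambda>s. g s \<le> g t + \<epsilon>*(s-t)) (at_right t)"
  by (rule dini_le[OF assms(1,2) _ _ assms(3)]) auto

context flow begin

lemma n_cont: "continuous_on {a..b} (\<lambda>s. u s \<bullet> u s)" if "0 \<le> a" for a b
  by (intro continuous_intros continuous_on_subset[OF ucont]) (use that in auto)

lemma norm_mono:
  assumes "0 \<le> a" "a \<le> b"
  shows "norm (u b) \<le> norm (u a)"
proof -
  have "u b \<bullet> u b \<le> u a \<bullet> u a"
  proof (rule mono_right[OF assms(2) n_cont[OF assms(1)]])
    fix t \<epsilon> :: real assume t: "a < t" "t < b" and e: "\<epsilon> > 0"
    have t0: "t > 0" using t assms by auto
    show "eventually (\<lambda>s. u s \<bullet> u s \<le> u t \<bullet> u t + \<epsilon> * (s - t)) (at_right t)"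
      by (rule dini_self[OF nder[OF t0] _ e]) (use j_nonneg[of t] p1 in auto)
  qed
  then show ?thesis by (simp add: norm_le)
qed

lemma orth:
  assumes n: "J n = 0" and s: "s \<ge> 0"
  shows "u s \<bullet> n = f \<bullet> n"
proof -
  have cg: "continuous_on {0..s} (\<lambda>r. c * (u r \<bullet> n))" for c
    by (intro continuous_intros continuous_on_subset[OF ucont]) auto
  have d: "((\<lambda>r. c * (u r \<bullet> n)) has_real_derivative 0) (at t within {t..})" if t: "t > 0" for t c
  proof -
    have "((\<lambda>r. u r \<bullet> n) has_real_derivative (u t \<bullet> 0 + (- Z t) \<bullet> n)) (at t within {t..})"
      by (rule inner_der[OF uder[OF t]]) (rule has_vector_derivative_const)
    moreover have "Z t \<bullet> n = 0" by (rule subdiff_null[OF Zsub[OF t] n])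
    ultimately have "((\<lambda>r. u r \<bullet> n) has_real_derivative 0) (at t within {t..})" by simp
    from DERIV_cmult[OF this, of c] show ?thesis by simp
  qed
  have m: "c * (u s \<bullet> n) \<le> c * (u 0 \<bullet> n)" for c
  proof (rule mono_right[OF s cg])
    fix t \<epsilon> :: real assume t: "0 < t" "t < s" and e: "\<epsilon> > 0"
    show "eventually (\<lambda>r. c * (u r \<bullet> n) \<le> c * (u t \<bullet> n) + \<epsilon> * (r - t)) (at_right t)"
      by (rule dini_self[OF d[OF t(1)] _ e]) auto
  qed
  from m[of 1] m[of "-1"] show ?thesis using u0 by simp
qed

lemma extinction:
  assumes fe: "\<exists>T>0. \<forall>s\<ge>T. u s = 0" and f0: "f \<noteq> 0"
  shows "extinction_time u > 0" "\<And>s. s \<ge> extinction_time u \<Longrightarrow> u s = 0"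
    "\<And>s. 0 \<le> s \<Longrightarrow> s < extinction_time u \<Longrightarrow> u s \<noteq> 0"
proof -
  define S where "S = {T. T > 0 \<and> (\<forall>t\<ge>T. u t = 0)}"
  have Tdef: "extinction_time u = Inf S" unfolding S_def extinction_time_def ..
  have Sne: "S \<noteq> {}" using fe unfolding S_def by auto
  have bdd: "bdd_below S" unfolding S_def by (rule bdd_belowI[of _ 0]) auto
  have T0: "extinction_time u \<ge> 0" unfolding Tdef using Sne by (rule cInf_greatest) (auto simp: S_def)
  have after: "u s = 0" if s: "s > extinction_time u" for s
  proof -
    from s have "Inf S < s" unfolding Tdef .
    then obtain T' where "T' \<in> S" "T' < s" using cInf_lessD[OF Sne] by blast
    then show ?thesis unfolding S_def by auto
  qed
  have atT: "u (extinction_time u) = 0"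
  proof -
    have "(u \<longlongrightarrow> u (extinction_time u)) (at_right (extinction_time u))" by (rule ucont_right[OF T0])
    moreover have "eventually (\<lambda>s. u s = 0) (at_right (extinction_time u))"
      using after by (auto simp: eventually_at_right_field intro: exI[of _ "extinction_time u + 1"])
    ultimately have "(\<lambda>s. 0) \<midarrow>extinction_time u\<rightarrow> u (extinction_time u) \<or> True" by simp
    have "((\<lambda>s. 0::'a) \<longlongrightarrow> u (extinction_time u)) (at_right (extinction_time u))"
      using \<open>(u \<longlongrightarrow> _) _\<close> \<open>eventually _ _\<close> by (rule Lim_transform_eventually)
    then show ?thesis using tendsto_const_iff[OF trivial_limit_at_right_real] by metis
  qed
  show after': "u s = 0" if "s \<ge> extinction_time u" for s
    using after atT that by (cases "s = extinction_time u") auto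
  show pos: "extinction_time u > 0"
  proof (rule ccontr)
    assume "\<not> extinction_time u > 0"
    hence "extinction_time u = 0" using T0 by auto
    then show False using atT u0 f0 by simp
  qed
  show "u s \<noteq> 0" if s: "0 \<le> s" "s < extinction_time u" for s
  proof
    assume us: "u s = 0"
    show False
    proof (cases "s = 0")
      case True then show False using us u0 f0 by simp
    next
      case False
      hence "s \<in> S" unfolding S_def using s us norm_mono[of s] by force
      hence "extinction_time u \<le> s" unfolding Tdef by (rule cInf_lower[OF _ bdd])
      then show False using s by simp
    qed
  qed
qed

end


locale flowT = flow J p u f for J :: "'a::{real_inner,complete_space} \<Rightarrow> ereal" and p u f +
  fixes T \<mu> :: real
  assumes Tpos: "T > 0" and uT: "\<And>s. s \<ge> T \<Longrightarrow> u s = 0"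
    and unz: "\<And>s. 0 \<le> s \<Longrightarrow> s < T \<Longrightarrow> u s \<noteq> 0"
    and p2: "p < 2" and mu: "\<mu> > 0"
    and rho_lb: "\<And>s. 0 < s \<Longrightarrow> s < T \<Longrightarrow> \<mu> * norm (u s) powr p \<le> p * j s"
begin

definition n where "n s = u s \<bullet> u s"
definition q where "q = 2 - p"
definition rho where "rho s = p * j s * n s powr (- p / 2)"
definition phi where "phi s = n s powr (q / 2)"
definition psi where "psi s = phi s / (T - s)"

lemma q_pos: "q > 0" using p2 by (simp add: q_def)

lemma n_pos: "0 \<le> s \<Longrightarrow> s < T \<Longrightarrow> n s > 0"
  using unz[of s] by (simp add: n_def)

lemma n_nonneg: "n s \<ge> 0" by (simp add: n_def)

lemma n_powr: "n s powr r = norm (u s) powr (2 * r)"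
proof (cases "u s = 0")
  case True then show ?thesis by (simp add: n_def)
next
  case False
  have "n s = norm (u s) powr 2"
    using False by (simp add: n_def power2_norm_eq_inner[symmetric] powr_realpow[of _ 2, simplified])
  then show ?thesis by (simp only: powr_powr)
qed

lemma rho_ge: assumes "0 < s" "s < T" shows "rho s \<ge> \<mu>"
proof -
  have nu: "norm (u s) > 0" using unz[of s] assms by auto
  have "\<mu> = \<mu> * norm (u s) powr p * norm (u s) powr (-p)"
    using nu by (simp add: powr_minus field_simps)
  also have "\<dots> \<le> p * j s * norm (u s) powr (-p)"
    by (rule mult_right_mono[OF rho_lb[OF assms]]) simp
  also have "\<dots> = rho s" unfolding rho_def n_powr by simp
  finally show ?thesis .
qed

lemma n_der: "t > 0 \<Longrightarrow> (n has_real_derivative (- 2 * (p * j t))) (at t within {t..})"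
  unfolding n_def[abs_def] by (rule nder)

lemma n_cont': "0 \<le> a \<Longrightarrow> continuous_on {a..b} n"
  unfolding n_def[abs_def] by (rule n_cont)

lemma npow_der:
  assumes t: "0 < t" "t < T"
  shows "((\<lambda>s. n s powr r) has_real_derivative (r * n t powr (r - 1) * (- 2 * (p * j t)))) (at t within {t..})"
  by (rule DERIV_chain2[OF has_real_derivative_powr n_der]) (use n_pos t in auto)

lemma rho_cont: assumes "0 < a" "b < T" shows "continuous_on {a..b} rho"
proof -
  have nz: "\<forall>x\<in>{a..b}. n x \<noteq> 0"
  proof
    fix x assume "x \<in> {a..b}"
    then have "0 \<le> x" "x < T" using assms by auto
    from n_pos[OF this] show "n x \<noteq> 0" by simp
  qed
  show ?thesis unfolding rho_def
    by (intro continuous_intros j_cont n_cont' nz) (use assms in auto)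
qed

lemma rho_mono:
  assumes ab: "0 < a" "a \<le> b" "b < T"
  shows "rho b \<le> rho a"
proof (rule mono_right[OF ab(2) rho_cont[OF ab(1,3)]])
  fix t \<epsilon> :: real assume t: "a < t" "t < b" and e: "\<epsilon> > 0"
  have t0: "0 < t" "t < T" using t ab by auto
  define N where "N = norm (Z t)"
  define c where "c = n t powr (- p / 2 - 1)"
  have c: "c > 0" unfolding c_def using n_pos[of t] t0 by simp
  have nc: "n t powr (- p / 2) = c * n t"
  proof -
    have "n t powr (- p / 2) = n t powr ((- p / 2 - 1) + 1)" by simp
    also have "\<dots> = n t powr (- p / 2 - 1) * n t powr 1" by (rule powr_add)
    also have "\<dots> = c * n t" unfolding c_def using n_pos[of t] t0 by simp
    finally show ?thesis .
  qed
  define G where "G s = p * (k t s * n s powr (- p / 2))" for s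
  have dG: "(G has_real_derivative p * (k t t * (- p / 2 * n t powr (- p / 2 - 1) * (- 2 * (p * j t)))
      + (- (N ^ 2)) * n t powr (- p / 2))) (at t within {t..})"
    unfolding G_def N_def
    by (intro DERIV_cmult DERIV_mult' k_der npow_der t0)
  have ktt: "k t t = j t" by (simp add: k_def)
  have cs: "(p * j t)^2 \<le> N^2 * n t"
  proof -
    have "Z t \<bullet> u t \<le> N * norm (u t)" unfolding N_def by (rule norm_cauchy_schwarz)
    moreover have "Z t \<bullet> u t = p * j t" by (rule euler_u[OF t0(1)])
    moreover have "0 \<le> p * j t" using p1 j_nonneg[of t] by simp
    ultimately have "(p * j t)^2 \<le> (N * norm (u t))^2" by (intro power_mono) auto
    then show ?thesis by (simp add: n_def power_mult_distrib power2_norm_eq_inner)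
  qed
  have D: "p * (k t t * (- p / 2 * n t powr (- p / 2 - 1) * (- 2 * (p * j t)))
      + (- (N ^ 2)) * n t powr (- p / 2)) = p * c * ((p * j t)^2 - N^2 * n t)"
    unfolding ktt nc c_def[symmetric] by (simp add: algebra_simps power2_eq_square)
  have Dle: "p * c * ((p * j t)^2 - N^2 * n t) \<le> 0"
    using cs c p1 by (intro mult_nonneg_nonpos) auto
  show "eventually (\<lambda>s. rho s \<le> rho t + \<epsilon> * (s - t)) (at_right t)"
  proof (rule dini_le[OF dG _ _ _ e])
    show "p * (k t t * (- p / 2 * n t powr (- p / 2 - 1) * (- 2 * (p * j t))) + - (N ^ 2) * n t powr (- p / 2)) \<le> 0"
      using Dle by (simp only: D)
    show "rho t = G t" unfolding rho_def G_def ktt by simp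
    show "eventually (\<lambda>s. rho s \<le> G s) (at_right t)"
      unfolding eventually_at_right_field
    proof (intro exI[of _ "t + 1"] conjI allI impI)
      fix s assume s: "t < s" "s < t + 1"
      have "j s \<le> k t s" by (rule j_le_k) (use s t0 in auto)
      then show "rho s \<le> G s" unfolding rho_def G_def using p1
        by (simp add: mult_right_mono mult.assoc)
    qed simp
  qed
qed

lemma phi_der:
  assumes t: "0 < t" "t < T"
  shows "(phi has_real_derivative (- q * rho t)) (at t within {t..})"
proof -
  have "(phi has_real_derivative (q / 2 * n t powr (q / 2 - 1) * (- 2 * (p * j t)))) (at t within {t..})"
    unfolding phi_def[abs_def] by (rule npow_der[OF t])
  moreover have "q / 2 - 1 = - p / 2" by (simp add: q_def field_simps)
  ultimately show ?thesis by (simp add: rho_def algebra_simps)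
qed

lemma phi_cont: "0 \<le> a \<Longrightarrow> continuous_on {a..b} phi"
  unfolding phi_def
  by (intro continuous_on_powr' n_cont' continuous_intros) (use n_nonneg q_pos in auto)

lemma phi_T: "phi T = 0" unfolding phi_def n_def using uT[of T] q_pos by simp

lemma phi_norm: "phi s = norm (u s) powr q" unfolding phi_def n_powr by simp

lemma phi_lower:
  assumes s: "0 < s" "s < T" and c: "\<And>r. s \<le> r \<Longrightarrow> r < T \<Longrightarrow> c \<le> rho r"
  shows "phi s \<ge> q * c * (T - s)"
proof -
  have "phi T + q * c * T \<le> phi s + q * c * s"
  proof (rule mono_right[where g = "\<lambda>r. phi r + q * c * r"])
    show "s \<le> T" using s by simp
    show "continuous_on {s..T} (\<lambda>r. phi r + q * c * r)" by (intro continuous_intros phi_cont) (use s in auto)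
    fix r \<epsilon> :: real assume r: "s < r" "r < T" and e: "\<epsilon> > 0"
    have "((\<lambda>r. phi r + q * c * r) has_real_derivative (- q * rho r + q * c * 1)) (at r within {r..})"
      by (intro DERIV_add phi_der DERIV_cmult DERIV_ident) (use r s in auto)
    moreover have "- q * rho r + q * c * 1 \<le> 0"
      using c[of r] r q_pos by (simp add: algebra_simps mult_left_mono)
    ultimately show "eventually (\<lambda>x. phi x + q * c * x \<le> phi r + q * c * r + \<epsilon> * (x - r)) (at_right r)"
      by (rule dini_self[OF _ _ e])
  qed
  then show ?thesis using phi_T by (simp add: algebra_simps)
qed

lemma phi_upper:
  assumes s: "0 < s" "s < T"
  shows "phi s \<le> q * rho s * (T - s)"
proof -
  have "- phi T - q * rho s * T \<le> - phi s - q * rho s * s"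
  proof (rule mono_right[where g = "\<lambda>r. - phi r - q * rho s * r"])
    show "s \<le> T" using s by simp
    show "continuous_on {s..T} (\<lambda>r. - phi r - q * rho s * r)" by (intro continuous_intros phi_cont) (use s in auto)
    fix r \<epsilon> :: real assume r: "s < r" "r < T" and e: "\<epsilon> > 0"
    have "((\<lambda>r. - phi r - q * rho s * r) has_real_derivative (- (- q * rho r) - q * rho s * 1)) (at r within {r..})"
      by (intro DERIV_diff DERIV_minus phi_der DERIV_cmult DERIV_ident) (use r s in auto)
    moreover have "- (- q * rho r) - q * rho s * 1 \<le> 0"
      using rho_mono[of s r] r s q_pos by (simp add: algebra_simps mult_left_mono)
    ultimately show "eventually (\<lambda>x. - phi x - q * rho s * x \<le> - phi r - q * rho s * r + \<epsilon> * (x - r)) (at_right r)"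
      by (rule dini_self[OF _ _ e])
  qed
  then show ?thesis using phi_T by (simp add: algebra_simps)
qed

lemma psi_mono:
  assumes ab: "0 \<le> a" "a \<le> b" "b < T"
  shows "psi b \<le> psi a"
proof (rule mono_right[OF ab(2)])
  show "continuous_on {a..b} psi" unfolding psi_def
    by (intro continuous_intros phi_cont) (use ab in auto)
  fix r \<epsilon> :: real assume r: "a < r" "r < b" and e: "\<epsilon> > 0"
  have r0: "0 < r" "r < T" using r ab by auto
  have "(psi has_real_derivative ((- q * rho r) * (T - r) - phi r * (0 - 1)) / ((T - r) * (T - r))) (at r within {r..})"
    unfolding psi_def[abs_def]
    by (intro DERIV_divide phi_der DERIV_diff DERIV_const DERIV_ident) (use r0 in auto)
  moreover have "((- q * rho r) * (T - r) - phi r * (0 - 1)) / ((T - r) * (T - r)) \<le> 0"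
  proof (rule divide_nonpos_nonneg)
    show "0 \<le> (T - r) * (T - r)" by simp
    show "(- q * rho r) * (T - r) - phi r * (0 - 1) \<le> 0" using phi_upper[OF r0] by (simp add: algebra_simps)
  qed
  ultimately show "eventually (\<lambda>x. psi x \<le> psi r + \<epsilon> * (x - r)) (at_right r)"
    by (rule dini_self[OF _ _ e])
qed

end


lemma powr_le_imp:
  fixes x y r :: real
  assumes "0 < r" "0 \<le> x" "0 \<le> y" "x powr r \<le> y powr r"
  shows "x \<le> y"
proof -
  have "(x powr r) powr (1/r) \<le> (y powr r) powr (1/r)"
    by (rule powr_mono2) (use assms in auto)
  then show ?thesis using assms by (simp add: powr_powr)
qed

context flowT begin

definition lam where "lam = 1 / (q * T)"
definition a where "a s = (1 - s / T) powr (1 / q)" for s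
definition w where "w s = u s /\<^sub>R a s" for s
definition jw where "jw s = j s / a s powr p" for s

lemma lamqT: "lam * q * T = 1" unfolding lam_def using q_pos Tpos by simp
lemma lam_pos: "lam > 0" unfolding lam_def using q_pos Tpos by simp

lemma a_pos: "s < T \<Longrightarrow> a s > 0" unfolding a_def using Tpos by simp
lemma a_T: "a T = 0" unfolding a_def using Tpos q_pos by simp
lemma a_powr_q: "s \<le> T \<Longrightarrow> a s powr q = 1 - s / T"
  unfolding a_def using q_pos Tpos by (simp add: powr_powr)

lemma norm_w: "s < T \<Longrightarrow> norm (w s) = norm (u s) / a s"
  unfolding w_def using a_pos[of s] by (simp add: divide_inverse mult.commute)

lemma norm_w_powr:
  assumes "s < T"
  shows "norm (w s) powr q = T * psi s"
proof -
  have "norm (w s) powr q = norm (u s) powr q / a s powr q"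
    unfolding norm_w[OF assms] using a_pos[OF assms] by (simp add: powr_divide)
  also have "\<dots> = phi s / (1 - s / T)" using a_powr_q[of s] assms phi_norm by simp
  also have "\<dots> = T * psi s" unfolding psi_def using Tpos assms by (simp add: field_simps)
  finally show ?thesis .
qed

lemma psi0: "T * psi 0 = norm f powr q"
  unfolding psi_def phi_norm using u0 Tpos by simp

lemma w_bound: assumes "0 \<le> s" "s < T" shows "norm (w s) \<le> norm f"
proof (rule powr_le_imp[OF q_pos])
  show "norm (w s) powr q \<le> norm f powr q"
    unfolding norm_w_powr[OF assms(2)] psi0[symmetric] using psi_mono[of 0 s] assms Tpos by simp
qed auto

lemma w_mono: assumes "0 \<le> s" "s \<le> s'" "s' < T" shows "norm (w s') \<le> norm (w s)"
proof (rule powr_le_imp[OF q_pos])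
  show "norm (w s') powr q \<le> norm (w s) powr q"
    unfolding norm_w_powr[OF assms(3)] norm_w_powr[of s] using psi_mono[of s s'] assms Tpos
    by (simp add: norm_w_powr)
qed auto

lemma psi_lower: assumes "0 < s" "s < T" "\<And>r. s \<le> r \<Longrightarrow> r < T \<Longrightarrow> c \<le> rho r" shows "psi s \<ge> q * c"
proof -
  have "phi s \<ge> q * c * (T - s)" by (rule phi_lower[OF assms])
  then show ?thesis unfolding psi_def using assms by (simp add: pos_le_divide_eq)
qed

lemma w_lower: assumes "0 \<le> s" "s < T" shows "norm (w s) powr q \<ge> T * q * \<mu>"
proof -
  have pl: "psi r \<ge> q * \<mu>" if "0 < r" "r < T" for r
    by (rule psi_lower[OF that]) (use rho_ge that in auto)
  have "psi s \<ge> q * \<mu>"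
  proof (cases "s = 0")
    case True
    have "psi (T/2) \<le> psi 0" by (rule psi_mono) (use Tpos in auto)
    then show ?thesis using pl[of "T/2"] Tpos True by simp
  next
    case False then show ?thesis using pl assms by auto
  qed
  then show ?thesis unfolding norm_w_powr[OF assms(2)] using Tpos by (simp add: mult.assoc)
qed

lemma J_w:
  assumes "0 < s" "s < T"
  shows "J (w s) = ereal (jw s)" "p * jw s = rho s * norm (w s) powr p"
proof -
  have ap: "a s > 0" using a_pos assms by simp
  have "J (w s) = ereal ((1 / a s) powr p) * J (u s)" unfolding w_def
    using Jscale_pos[of "1 / a s" "u s"] ap by (simp add: divide_inverse)
  also have "\<dots> = ereal (jw s)" unfolding jw_def Ju[OF assms(1)] using ap by (simp add: powr_divide)
  finally show "J (w s) = ereal (jw s)" .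
  have nu: "norm (u s) > 0" using unz[of s] assms by auto
  have "rho s * norm (w s) powr p = p * j s * norm (u s) powr (-p) * (norm (u s) powr p / a s powr p)"
    unfolding rho_def n_powr norm_w[OF assms(2)] using ap by (simp add: powr_divide)
  also have "\<dots> = p * j s / a s powr p" using nu by (simp add: powr_minus field_simps)
  finally show "p * jw s = rho s * norm (w s) powr p" unfolding jw_def by simp
qed

end


locale flowS = flowT J p u f T \<mu> for J :: "'a::{real_inner,complete_space} \<Rightarrow> ereal" and p u f T \<mu> +
  fixes tt :: "nat \<Rightarrow> real" and ws :: 'a
  assumes tt0: "\<And>k. 0 \<le> tt k" and ttT: "\<And>k. tt k < T" and tlim: "tt \<longlonglongrightarrow> T"
    and conv: "(\<lambda>k. w (tt k)) \<longlonglongrightarrow> ws" and lsc: "ereal_lsc J"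
begin

definition ell where "ell = norm ws"

lemma ev_ge: "s < T \<Longrightarrow> eventually (\<lambda>k. tt k > s) sequentially"
  using order_tendstoD(1)[OF tlim] by auto

lemma nconv: "(\<lambda>k. norm (w (tt k))) \<longlonglongrightarrow> ell"
  unfolding ell_def by (intro tendsto_intros conv)

lemma ws_le_f: "norm ws \<le> norm f"
  using tendsto_le[OF trivial_limit_sequentially tendsto_const nconv] w_bound tt0 ttT
  unfolding ell_def by auto

definition m0 where "m0 = (T * q * \<mu>) powr (1 / q)"

lemma m0_pos: "m0 > 0" unfolding m0_def using Tpos q_pos mu by simp

lemma w_ge_m0: assumes "0 \<le> s" "s < T" shows "m0 \<le> norm (w s)"
proof -
  have "(T * q * \<mu>) powr (1 / q) \<le> (norm (w s) powr q) powr (1 / q)"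
    by (rule powr_mono2) (use w_lower[OF assms] Tpos q_pos mu in auto)
  then show ?thesis unfolding m0_def using q_pos by (simp add: powr_powr)
qed

lemma ell_ge_m0: "m0 \<le> ell"
  using tendsto_le[OF trivial_limit_sequentially nconv tendsto_const] w_ge_m0 tt0 ttT by auto

lemma ell_pos: "ell > 0" using ell_ge_m0 m0_pos by simp

lemma ws_nz: "ws \<noteq> 0" using ell_pos unfolding ell_def by auto

lemma ell_le: assumes "0 \<le> s" "s < T" shows "ell \<le> norm (w s)"
proof (rule tendsto_le[OF trivial_limit_sequentially tendsto_const nconv])
  show "eventually (\<lambda>k. norm (w (tt k)) \<le> norm (w s)) sequentially"
    using ev_ge[OF assms(2)] by eventually_elim (use assms ttT in \<open>auto intro!: w_mono\<close>)
qed

lemma npconv: "(\<lambda>k. norm (w (tt k)) powr q) \<longlonglongrightarrow> ell powr q"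
  by (rule tendsto_powr[OF nconv tendsto_const]) (use ell_pos in auto)

lemma claimA:
  assumes e: "e > 0"
  shows "\<exists>s. 0 < s \<and> s < T \<and> rho s \<le> lam * ell powr q + e"
proof (rule ccontr)
  assume H: "\<not> ?thesis"
  define c where "c = lam * ell powr q + e"
  have lowr: "norm (w s) powr q \<ge> ell powr q + T * q * e" if s: "0 < s" "s < T" for s
  proof -
    have "psi s \<ge> q * c" by (rule psi_lower[OF s]) (use H s in \<open>auto simp: c_def not_le\<close>)
    hence "T * psi s \<ge> T * (q * c)" using Tpos by simp
    moreover have "T * (q * c) = ell powr q + T * q * e" unfolding c_def using lamqT
      by (simp add: algebra_simps)
    ultimately show ?thesis using norm_w_powr[OF s(2)] by simp
  qed
  have "ell powr q + T * q * e \<le> ell powr q"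
  proof (rule tendsto_le[OF trivial_limit_sequentially npconv tendsto_const])
    show "eventually (\<lambda>k. ell powr q + T * q * e \<le> norm (w (tt k)) powr q) sequentially"
      using ev_ge[OF Tpos] by eventually_elim (use lowr ttT in auto)
  qed
  moreover have "T * q * e > 0" using Tpos q_pos e by simp
  ultimately show False by simp
qed

lemma claimC:
  assumes d: "\<delta> > 0"
  shows "\<exists>S0. 0 < S0 \<and> S0 < T \<and> (\<forall>s. S0 \<le> s \<longrightarrow> s < T \<longrightarrow> p * jw s \<le> lam * ell^2 + \<delta>)"
proof -
  define F where "F e = (lam * ell powr q + e) * (ell + e) powr p" for e
  have F0: "F 0 = lam * ell^2"
  proof -
    have "ell powr q * ell powr p = ell powr (q + p)" by (simp add: powr_add)
    also have "q + p = 2" by (simp add: q_def)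
    finally show ?thesis unfolding F_def using ell_pos by (simp add: powr_realpow[of _ 2, simplified])
  qed
  have "(F \<longlongrightarrow> F 0) (at_right 0)" unfolding F_def
    by (rule tendsto_within_subset[of _ _ _ UNIV])
       (auto intro!: tendsto_eq_intros simp: ell_pos ell_pos[THEN less_imp_neq, symmetric])
  hence "eventually (\<lambda>e. F e < lam * ell^2 + \<delta>) (at_right 0)"
    using d F0 by (intro order_tendstoD) auto
  then obtain b where b: "b > 0" "\<And>y. 0 < y \<Longrightarrow> y < b \<Longrightarrow> F y < lam * ell^2 + \<delta>"
    unfolding eventually_at_right_field by auto
  define e where "e = b / 2"
  have e: "e > 0" "F e < lam * ell^2 + \<delta>" using b unfolding e_def by auto
  obtain s1 where s1: "0 < s1" "s1 < T" "rho s1 \<le> lam * ell powr q + e" using claimA[OF e(1)] by blast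
  have "eventually (\<lambda>k. norm (w (tt k)) < ell + e) sequentially"
    using order_tendstoD(2)[OF nconv] e by simp
  moreover have "eventually (\<lambda>k. tt k > 0) sequentially" using ev_ge[OF Tpos] .
  ultimately have "eventually (\<lambda>k. norm (w (tt k)) < ell + e \<and> tt k > 0) sequentially" by eventually_elim auto
  then obtain N where N: "norm (w (tt N)) < ell + e" "tt N > 0" unfolding eventually_sequentially by auto
  define S0 where "S0 = max s1 (tt N)"
  have S0: "0 < S0" "S0 < T" unfolding S0_def using s1 ttT[of N] by auto
  show ?thesis
  proof (intro exI[of _ S0] conjI allI impI S0)
    fix s assume s: "S0 \<le> s" "s < T"
    have s0: "0 < s" using S0 s by simp
    have r1: "rho s \<le> lam * ell powr q + e"
      using rho_mono[of s1 s] s1 s unfolding S0_def by auto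
    have r0: "0 \<le> rho s" using rho_ge[OF s0 s(2)] mu by simp
    have n1: "norm (w s) \<le> ell + e"
      using w_mono[of "tt N" s] N tt0[of N] s unfolding S0_def by auto
    have "p * jw s = rho s * norm (w s) powr p" by (rule J_w(2)[OF s0 s(2)])
    also have "\<dots> \<le> (lam * ell powr q + e) * (ell + e) powr p"
      by (intro mult_mono r1 powr_mono2 n1) (use p1 lam_pos e(1) in auto)
    also have "\<dots> < lam * ell^2 + \<delta>" using e(2) unfolding F_def .
    finally show "p * jw s \<le> lam * ell^2 + \<delta>" by simp
  qed
qed

end


context flowS begin

lemma Zv_bound:
  assumes r: "0 < r" "r < T" and v: "J v = ereal jv" and B: "jw r \<le> B"
  shows "Z r \<bullet> v \<le> a r powr (p - 1) * (jv + (p - 1) * B)"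
proof -
  have ap: "a r > 0" using a_pos r by simp
  have Jav: "J (a r *\<^sub>R v) = ereal (a r powr p * jv)" using Jscale_pos[OF ap, of v] v by simp
  have "j r + Z r \<bullet> (a r *\<^sub>R v - u r) \<le> real_of_ereal (J (a r *\<^sub>R v))"
    by (rule subgrad_u[OF r(1)]) (simp add: Jav)
  hence "j r + a r * (Z r \<bullet> v) - p * j r \<le> a r powr p * jv"
    using euler_u[OF r(1)] Jav by (simp add: inner_diff_right)
  moreover have jr: "j r = a r powr p * jw r" unfolding jw_def using ap by simp
  ultimately have "a r * (Z r \<bullet> v) \<le> a r powr p * (jv + (p - 1) * jw r)" by (simp add: algebra_simps)
  also have "\<dots> \<le> a r powr p * (jv + (p - 1) * B)"
    using B p1 by (intro mult_left_mono add_left_mono mult_left_mono) auto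
  also have "a r powr p = a r * a r powr (p - 1)"
  proof -
    have "a r powr p = a r powr (1 + (p - 1))" by simp
    also have "\<dots> = a r powr 1 * a r powr (p - 1)" by (rule powr_add)
    finally show ?thesis using ap by simp
  qed
  finally have "a r * (Z r \<bullet> v) \<le> a r * (a r powr (p - 1) * (jv + (p - 1) * B))" by (simp add: mult.assoc)
  then show ?thesis using ap by simp
qed

lemma a_der:
  assumes r: "r < T"
  shows "(a has_real_derivative (1 / q * (1 - r / T) powr (1 / q - 1) * (0 - 1 / T))) (at r within {r..})"
  unfolding a_def[abs_def]
proof (rule DERIV_chain2[OF has_real_derivative_powr])
  show "0 < 1 - r / T" using r Tpos by simp
  show "((\<lambda>s. 1 - s / T) has_real_derivative 0 - 1 / T) (at r within {r..})"
    by (intro DERIV_diff DERIV_const DERIV_cdivide[of "\<lambda>x. x" 1, simplified] DERIV_ident)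
qed

lemma a_cont: "continuous_on {x..T} a"
  unfolding a_def
  by (intro continuous_on_powr' continuous_intros) (use q_pos Tpos in \<open>auto simp: field_simps\<close>)

lemma a_pow: "r \<le> T \<Longrightarrow> (1 - r / T) powr (1 / q - 1) = a r powr (p - 1)"
  unfolding a_def using q_pos by (simp add: powr_powr q_def field_simps)

lemma main_delta:
  assumes v: "J v = ereal jv" and d: "\<delta> > 0"
  shows "lam * (ws \<bullet> v) \<le> jv + (p - 1) * (lam * ell^2 / p + \<delta>)"
proof -
  obtain S0 where S0: "0 < S0" "S0 < T" "\<And>s. S0 \<le> s \<Longrightarrow> s < T \<Longrightarrow> p * jw s \<le> lam * ell^2 + p * \<delta>"
    using claimC[of "p * \<delta>"] d p1 by auto
  define K where "K = jv + (p - 1) * (lam * ell^2 / p + \<delta>)"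
  define g where "g s = K / lam * a s - u s \<bullet> v" for s
  have gT: "g T = 0" unfolding g_def using a_T uT[of T] by simp
  have step: "g T \<le> g x" if x: "S0 \<le> x" "x \<le> T" for x
  proof (rule mono_right[OF x(2)])
    show "continuous_on {x..T} g" unfolding g_def
      by (intro continuous_intros a_cont continuous_on_subset[OF ucont]) (use x S0 in auto)
    fix r \<epsilon> :: real assume r: "x < r" "r < T" and e: "\<epsilon> > 0"
    have r0: "0 < r" using r x S0 by simp
    have dg: "(g has_real_derivative (K / lam * (1 / q * (1 - r / T) powr (1 / q - 1) * (0 - 1 / T))
        - (u r \<bullet> 0 + (- Z r) \<bullet> v))) (at r within {r..})"
      unfolding g_def
      by (intro DERIV_diff DERIV_cmult a_der inner_der uder r0 r has_vector_derivative_const)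
    have B: "jw r \<le> lam * ell^2 / p + \<delta>"
    proof -
      have "p * jw r \<le> lam * ell^2 + p * \<delta>" using S0(3)[of r] r x by simp
      then show ?thesis using p1 by (simp add: field_simps)
    qed
    have Zv: "Z r \<bullet> v \<le> a r powr (p - 1) * K" unfolding K_def by (rule Zv_bound[OF r0 r(2) v B])
    have "K / lam * (1 / q * (1 - r / T) powr (1 / q - 1) * (0 - 1 / T))
        = - (K * (1 - r / T) powr (1 / q - 1)) / (lam * q * T)"
      using lam_pos q_pos Tpos by (simp add: field_simps)
    also have "\<dots> = - K * a r powr (p - 1)" unfolding lamqT using a_pow[of r] r by simp
    finally have "K / lam * (1 / q * (1 - r / T) powr (1 / q - 1) * (0 - 1 / T)) = - K * a r powr (p - 1)" .
    hence "K / lam * (1 / q * (1 - r / T) powr (1 / q - 1) * (0 - 1 / T)) - (u r \<bullet> 0 + (- Z r) \<bullet> v) \<le> 0"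
      using Zv by (simp add: algebra_simps)
    from dini_self[OF dg this e]
    show "eventually (\<lambda>s. g s \<le> g r + \<epsilon> * (s - r)) (at_right r)" .
  qed
  have "ws \<bullet> v \<le> K / lam"
  proof (rule tendsto_le[OF trivial_limit_sequentially tendsto_const])
    show "(\<lambda>k. w (tt k) \<bullet> v) \<longlonglongrightarrow> ws \<bullet> v" by (intro tendsto_intros conv)
    show "eventually (\<lambda>k. w (tt k) \<bullet> v \<le> K / lam) sequentially"
      using ev_ge[OF S0(2)]
    proof eventually_elim
      case (elim k)
      have "0 \<le> g (tt k)" using step[of "tt k"] gT elim ttT[of k] by simp
      hence "u (tt k) \<bullet> v \<le> K / lam * a (tt k)" unfolding g_def by simp
      moreover have "a (tt k) > 0" using a_pos ttT by simp
      ultimately have "(u (tt k) \<bullet> v) / a (tt k) \<le> K / lam"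
        by (simp add: pos_divide_le_eq mult.commute)
      then show ?case unfolding w_def by (simp add: divide_inverse mult.commute)
    qed
  qed
  then show ?thesis unfolding K_def using lam_pos by (simp add: pos_le_divide_eq mult.commute)
qed

lemma main_ineq:
  assumes v: "J v = ereal jv"
  shows "lam * (ws \<bullet> v) \<le> jv + (p - 1) * (lam * ell^2 / p)"
proof (rule field_le_epsilon)
  fix e :: real assume e: "e > 0"
  have "lam * (ws \<bullet> v) \<le> jv + (p - 1) * (lam * ell^2 / p + e)" by (rule main_delta[OF v e])
  moreover have "(p - 1) * e \<le> e" using p2 p1 e by (simp add: mult_le_cancel_right1)
  ultimately show "lam * (ws \<bullet> v) \<le> jv + (p - 1) * (lam * ell^2 / p) + e" by (simp add: algebra_simps)
qed

lemma J_ws: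
  shows "J ws \<le> ereal (lam * ell^2 / p)"
proof -
  have b: "J ws \<le> ereal (lam * ell^2 / p + \<delta>)" if d: "\<delta> > 0" for \<delta>
  proof -
    obtain S0 where S0: "0 < S0" "S0 < T" "\<And>s. S0 \<le> s \<Longrightarrow> s < T \<Longrightarrow> p * jw s \<le> lam * ell^2 + p * \<delta>"
      using claimC[of "p * \<delta>"] d p1 by auto
    have cl: "closed {x. J x \<le> ereal (lam * ell^2 / p + \<delta>)}" using lsc by (simp add: ereal_lsc_def)
    have "ws \<in> {x. J x \<le> ereal (lam * ell^2 / p + \<delta>)}"
    proof (rule Lim_in_closed_set[OF cl _ trivial_limit_sequentially conv])
      show "eventually (\<lambda>k. w (tt k) \<in> {x. J x \<le> ereal (lam * ell^2 / p + \<delta>)}) sequentially"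
        using ev_ge[OF S0(2)]
      proof eventually_elim
        case (elim k)
        have k: "0 < tt k" "tt k < T" using elim S0 ttT[of k] by auto
        have "p * jw (tt k) \<le> lam * ell^2 + p * \<delta>" using S0(3)[of "tt k"] elim k by simp
        hence "jw (tt k) \<le> lam * ell^2 / p + \<delta>" using p1 by (simp add: field_simps)
        then show ?case using J_w(1)[OF k] by simp
      qed
    qed
    then show ?thesis by simp
  qed
  have fin: "J ws \<noteq> \<infinity>" using b[of 1] by auto
  then obtain x where x: "J ws = ereal x" using Jnotm[of ws] by (cases "J ws") auto
  have "x \<le> lam * ell^2 / p"
  proof (rule field_le_epsilon)
    fix e :: real assume "e > 0"
    from b[OF this] x show "x \<le> lam * ell^2 / p + e" by simp
  qed
  then show ?thesis using x by simp
qed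

lemma final_subdiff: "lam *\<^sub>R ws \<in> subdiff J ws"
  unfolding subdiff_def
proof (intro CollectI allI)
  fix v
  show "J ws + ereal ((lam *\<^sub>R ws) \<bullet> (v - ws)) \<le> J v"
  proof (cases "J v = \<infinity>")
    case True then show ?thesis by simp
  next
    case False
    then obtain jv where v: "J v = ereal jv" using Jnotm[of v] by (cases "J v") auto
    obtain x where x: "J ws = ereal x" "x \<le> lam * ell^2 / p"
      using J_ws Jnotm[of ws] by (cases "J ws") auto
    have ip: "(lam *\<^sub>R ws) \<bullet> (v - ws) = lam * (ws \<bullet> v) - lam * ell^2"
      unfolding ell_def by (simp add: inner_diff_right power2_norm_eq_inner algebra_simps)
    have "x + (lam * (ws \<bullet> v) - lam * ell^2) \<le> jv"
    proof -
      have m: "lam * (ws \<bullet> v) \<le> jv + (p - 1) * (lam * ell^2 / p)" by (rule main_ineq[OF v])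
      have "(p - 1) * (lam * ell^2 / p) + lam * ell^2 / p = lam * ell^2" using p1 by (simp add: field_simps)
      with m x(2) show ?thesis by linarith
    qed
    then show ?thesis using x v ip by simp
  qed
qed

end


theorem theorem3:
  fixes J :: "'a::{real_inner, complete_space} \<Rightarrow> ereal"
    and p :: real and f w\<^sub>s :: 'a and u :: "real \<Rightarrow> 'a" and t :: "nat \<Rightarrow> real"
  assumes convex: "ereal_convex J"
    and lsc: "ereal_lsc J"
    and proper: "ereal_proper J"
    and dense: "closure (eff_dom J) = UNIV"
    and homog: "abs_p_homogeneous p J"
    and coercive: "lambda1 p J > 0"
    and p: "1 \<le> p" "p < 2"
    and f: "f \<in> H0 J"
    and flow: "gradient_flow J f u"
    and finite_ext: "\<exists>T>0. \<forall>s\<ge>T. u s = 0"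
    and seq: "incseq t" "\<forall>k. 0 \<le> t k \<and> t k < extinction_time u"
             "t \<longlonglongrightarrow> extinction_time u"
    and conv: "(\<lambda>k. u (t k) /\<^sub>R
                 ((1 - (2 - p) * (1 / ((2 - p) * extinction_time u)) * t k) powr (1 / (2 - p))))
               \<longlonglongrightarrow> w\<^sub>s"
  shows "(1 / ((2 - p) * extinction_time u)) *\<^sub>R w\<^sub>s \<in> subdiff J w\<^sub>s
         \<and> w\<^sub>s \<noteq> 0 \<and> norm w\<^sub>s \<le> norm f"
proof -
  interpret H: hom J p by unfold_locales (use convex proper homog p in auto)
  interpret F: flow J p u f by unfold_locales (rule flow)
  define T where "T = extinction_time u"
  have f0: "f \<noteq> 0" using f by (simp add: H0_def)
  have Tpos: "T > 0" and uT: "\<And>s. s \<ge> T \<Longrightarrow> u s = 0" and unz: "\<And>s. 0 \<le> s \<Longrightarrow> s < T \<Longrightarrow> u s \<noteq> 0"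
    using F.extinction[OF finite_ext f0] unfolding T_def by auto
  have forth: "\<forall>y\<in>null_set J. f \<bullet> y = 0" using f by (simp add: H0_def)
  have inH0: "u s \<in> H0 J" if s: "0 < s" "s < T" for s
  proof -
    have "u s \<bullet> y = 0" if y: "y \<in> null_set J" for y
      using F.orth[of y s] y forth s by (simp add: null_set_def)
    then show ?thesis using unz[of s] s by (simp add: H0_def)
  qed
  have lb: "lambda1 p J \<le> ereal (p * F.j s / norm (u s) powr p)" if s: "0 < s" "s < T" for s
  proof -
    have "lambda1 p J \<le> ereal p * J (u s) / ereal (norm (u s) powr p)"
      unfolding lambda1_def by (rule INF_lower[OF inH0[OF s]])
    also have "\<dots> = ereal (p * F.j s / norm (u s) powr p)"
      using F.Ju[OF s(1)] unz[of s] s by simp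
    finally show ?thesis .
  qed
  obtain \<mu> where mu: "lambda1 p J = ereal \<mu>"
    using lb[of "T/2"] Tpos coercive by (cases "lambda1 p J") auto
  have mupos: "\<mu> > 0" using coercive mu by simp
  have rho_lb: "\<mu> * norm (u s) powr p \<le> p * F.j s" if s: "0 < s" "s < T" for s
  proof -
    have "\<mu> \<le> p * F.j s / norm (u s) powr p" using lb[OF s] mu by simp
    moreover have "norm (u s) powr p > 0" using unz[of s] s by simp
    ultimately show ?thesis by (simp add: pos_le_divide_eq)
  qed
  interpret FT: flowT J p u f T \<mu>
    by unfold_locales (use Tpos uT unz p mupos rho_lb in auto)
  have aeq: "(1 - (2 - p) * (1 / ((2 - p) * T)) * x) powr (1 / (2 - p)) = FT.a x" for x
  proof -
    have "(2 - p) * (1 / ((2 - p) * T)) * x = x / T" using p Tpos by (simp add: field_simps)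
    then show ?thesis unfolding FT.a_def FT.q_def by simp
  qed
  have conv': "(\<lambda>k. FT.w (t k)) \<longlonglongrightarrow> w\<^sub>s"
    using conv unfolding FT.w_def T_def[symmetric] aeq .
  interpret FS: flowS J p u f T \<mu> t w\<^sub>s
    by unfold_locales (use seq conv' lsc in \<open>auto simp: T_def\<close>)
  have lam: "FT.lam = 1 / ((2 - p) * T)" by (simp add: FT.lam_def FT.q_def)
  have "(1 / ((2 - p) * T)) *\<^sub>R w\<^sub>s \<in> subdiff J w\<^sub>s" using FS.final_subdiff unfolding lam .
  then show ?thesis using FS.ws_nz FS.ws_le_f unfolding T_def by simp
qed


end
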